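(* Let $R$ be a commutative ring with ${\rm char}(R)\neq 2$ and $R_2\neq\{0\}$, and let $G$ be a non-abelian group with classical involution $*$ (the $R$-linear map on $RG$ with $g\mapsto g^{-1}$ for $g\in G$). Then $(RG)^-_*$ is commutative if and only if one of the following holds: \begin{enumerate} \item $G=K\rtimes\langle x\rangle$, where $K=\langle g\in G\mid g^2\neq 1\rangle$ is abelian, $x^2=1$, $xkx=k^{-1}$ for all $k\in K$, and $R_2^2=\{0\}$; \item ${\rm char}(R)=4$, $G$ has exponent $4$, $G'$ is cyclic of order $2$, $G/G'$ is an elementary abelian $2$-group, and, if $R_2^2\neq\{0\}$, elements of order $2$ in $G$ commute with each other. \end{enumerate}
   Context: $(RG)^-_*=\{\alpha\in RG\mid \alpha^*=-\alpha\}$; $R_2=\{r\in R\mid 2r=0\}$; $R_2^2=\{0\}$ means $r_1r_2=0$ for all $r_1,r_2\in R_2$. $G'$ is the commutator subgroup of $G$. *)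

theory Defs
  imports "HOL-Algebra.Algebra"
begin

definition grp_ring :: "('g, 'm) monoid_scheme \<Rightarrow> ('g \<Rightarrow> 'r::comm_ring_1) set" where
  "grp_ring G = {f. finite {g. f g \<noteq> 0} \<and> {g. f g \<noteq> 0} \<subseteq> carrier G}"

definition grp_ring_mult :: "('g, 'm) monoid_scheme \<Rightarrow> ('g \<Rightarrow> 'r::comm_ring_1) \<Rightarrow> ('g \<Rightarrow> 'r) \<Rightarrow> ('g \<Rightarrow> 'r)" where
  "grp_ring_mult G f h = (\<lambda>x. if x \<in> carrier G
      then (\<Sum>y\<in>{g. f g \<noteq> 0}. f y * h (inv\<^bsub>G\<^esub> y \<otimes>\<^bsub>G\<^esub> x)) else 0)"

definition grp_ring_star :: "('g, 'm) monoid_scheme \<Rightarrow> ('g \<Rightarrow> 'r::comm_ring_1) \<Rightarrow> ('g \<Rightarrow> 'r)" where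
  "grp_ring_star G f = (\<lambda>x. if x \<in> carrier G then f (inv\<^bsub>G\<^esub> x) else 0)"

definition grp_ring_skew :: "('g, 'm) monoid_scheme \<Rightarrow> ('g \<Rightarrow> 'r::comm_ring_1) set" where
  "grp_ring_skew G = {f \<in> grp_ring G. grp_ring_star G f = (\<lambda>x. - f x)}"

definition group_exponent :: "('g, 'm) monoid_scheme \<Rightarrow> nat \<Rightarrow> bool" where
  "group_exponent G n \<longleftrightarrow> 0 < n \<and> (\<forall>g\<in>carrier G. g [^]\<^bsub>G\<^esub> n = \<one>\<^bsub>G\<^esub>) \<and>
     (\<forall>m. 0 < m \<and> (\<forall>g\<in>carrier G. g [^]\<^bsub>G\<^esub> m = \<one>\<^bsub>G\<^esub>) \<longrightarrow> n \<le> m)"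

end

theory Submission
  imports Defs
begin

definition skew_comm :: "('g,'m) monoid_scheme \<Rightarrow> 'r::comm_ring_1 itself \<Rightarrow> bool" where
 "skew_comm G R \<longleftrightarrow> (\<forall>\<alpha> \<beta> :: 'g \<Rightarrow> 'r. \<alpha> \<in> grp_ring_skew G \<and> \<beta> \<in> grp_ring_skew G \<longrightarrow>
            grp_ring_mult G \<alpha> \<beta> = grp_ring_mult G \<beta> \<alpha>)"

lemma mult_fin_sum:
  assumes "finite S" "{g. f g \<noteq> 0} \<subseteq> S" "x \<in> carrier G"
  shows "grp_ring_mult G f h x = (\<Sum>y\<in>S. f y * h (inv\<^bsub>G\<^esub> y \<otimes>\<^bsub>G\<^esub> x))"
proof -
  have "(\<Sum>y\<in>{g. f g \<noteq> 0}. f y * h (inv\<^bsub>G\<^esub> y \<otimes>\<^bsub>G\<^esub> x)) = (\<Sum>y\<in>S. f y * h (inv\<^bsub>G\<^esub> y \<otimes>\<^bsub>G\<^esub> x))"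
    by (rule sum.mono_neutral_left) (use assms in auto)
  thus ?thesis using assms(3) by (simp add: grp_ring_mult_def)
qed

context group begin

definition e1 :: "'a \<Rightarrow> 'a \<Rightarrow> 'r::comm_ring_1" where
  "e1 g = (\<lambda>x. (if x = g then 1 else 0) - (if x = inv g then 1 else 0))"

definition e2 :: "'r::comm_ring_1 \<Rightarrow> 'a \<Rightarrow> 'a \<Rightarrow> 'r" where
  "e2 s a = (\<lambda>x. if x = a then s else 0)"

lemma e1_skew: assumes "g \<in> carrier G" shows "(e1 g :: 'a \<Rightarrow> 'r::comm_ring_1) \<in> grp_ring_skew G"
  using assms unfolding grp_ring_skew_def grp_ring_def grp_ring_star_def e1_def
  by (auto simp: fun_eq_iff intro: finite_subset[of _ "{g, inv g}"])

lemma e2_skew: assumes "a \<in> carrier G" "a \<otimes> a = \<one>" "2 * s = (0::'r::comm_ring_1)"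
  shows "e2 s a \<in> grp_ring_skew G"
proof -
  have ia: "inv a = a" using assms by (simp add: inv_equality)
  have "s = - s" using assms(3) by (simp add: eq_neg_iff_add_eq_0 mult_2[symmetric])
  then show ?thesis using assms ia unfolding grp_ring_skew_def grp_ring_def grp_ring_star_def e2_def
    by (auto simp: fun_eq_iff intro: finite_subset[of _ "{a}"])
qed

lemma mult_e1:
  assumes "g \<in> carrier G" "g \<otimes> g \<noteq> \<one>" "x \<in> carrier G"
  shows "grp_ring_mult G (e1 g) \<beta> x = \<beta> (inv g \<otimes> x) - (\<beta> (g \<otimes> x) :: 'r::comm_ring_1)"
proof -
  have ne: "g \<noteq> inv g" using assms by (metis r_inv)
  have "grp_ring_mult G (e1 g) \<beta> x = (\<Sum>y\<in>{g, inv g}. e1 g y * \<beta> (inv y \<otimes> x))"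
    by (rule mult_fin_sum) (auto simp: e1_def assms(3))
  also have "\<dots> = \<beta> (inv g \<otimes> x) - \<beta> (g \<otimes> x)"
    using ne assms by (simp add: e1_def)
  finally show ?thesis .
qed

lemma mult_e2:
  assumes "x \<in> carrier G"
  shows "grp_ring_mult G (e2 s a) \<beta> x = s * (\<beta> (inv a \<otimes> x) :: 'r::comm_ring_1)"
proof -
  have "grp_ring_mult G (e2 s a) \<beta> x = (\<Sum>y\<in>{a}. e2 s a y * \<beta> (inv y \<otimes> x))"
    by (rule mult_fin_sum) (auto simp: e2_def assms)
  also have "\<dots> = s * \<beta> (inv a \<otimes> x)" by (simp add: e2_def)
  finally show ?thesis .
qed

lemma R2_nonzero:
  assumes "\<exists>r::'r::comm_ring_1. 2 * r = 0 \<and> r \<noteq> 0"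
  shows "(1::'r) \<noteq> 0"
  using assms by auto

lemma lemB:
  fixes R :: "'r::comm_ring_1 itself"
  assumes sc: "skew_comm G R" and R2: "\<exists>r::'r. 2 * r = 0 \<and> r \<noteq> 0"
    and g: "g \<in> carrier G" "g \<otimes> g \<noteq> \<one>" and h: "h \<in> carrier G" "h \<otimes> h = \<one>"
  shows "g \<otimes> h = h \<otimes> g \<or> h \<otimes> g \<otimes> h = inv g"
proof (rule ccontr)
  assume nc: "\<not> (g \<otimes> h = h \<otimes> g \<or> h \<otimes> g \<otimes> h = inv g)"
  obtain s :: 'r where s: "2 * s = 0" "s \<noteq> 0" using R2 by auto
  have ih: "inv h = h" using h by (simp add: inv_equality)
  have eq: "grp_ring_mult G (e1 g) (e2 s h) = grp_ring_mult G (e2 s h) (e1 g)"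
    using sc e1_skew[OF g(1)] e2_skew[OF h s(1)] unfolding skew_comm_def by blast
  have x: "g \<otimes> h \<in> carrier G" using g h by simp
  have L: "grp_ring_mult G (e1 g) (e2 s h) (g \<otimes> h) = s"
  proof -
    have 1: "inv g \<otimes> (g \<otimes> h) = h" using g h by (simp add: m_assoc[symmetric])
    have 2: "g \<otimes> (g \<otimes> h) \<noteq> h" using g h by (metis m_assoc l_one r_cancel one_closed m_closed)
    show ?thesis using mult_e1[OF g x, of "e2 s h"] 1 2 by (simp add: e2_def)
  qed
  have 3: "inv h \<otimes> (g \<otimes> h) \<noteq> g" using nc g h ih
    by (metis inv_solve_left m_closed)
  have 4: "inv h \<otimes> (g \<otimes> h) \<noteq> inv g" using nc g h ih by (metis m_assoc)
  have R: "grp_ring_mult G (e2 s h) (e1 g) (g \<otimes> h) = 0"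
    using mult_e2[OF x, of s h "e1 g"] 3 4 by (simp add: e1_def)
  show False using L R eq s(2) by simp
qed

lemma lemC:
  fixes R :: "'r::comm_ring_1 itself"
  assumes sc: "skew_comm G R" and s: "2 * s1 = 0" "2 * s2 = 0" "s1 * s2 \<noteq> (0::'r)"
    and a: "a \<in> carrier G" "a \<otimes> a = \<one>" and b: "b \<in> carrier G" "b \<otimes> b = \<one>"
  shows "a \<otimes> b = b \<otimes> a"
proof (rule ccontr)
  assume nc: "a \<otimes> b \<noteq> b \<otimes> a"
  have eq: "grp_ring_mult G (e2 s1 a) (e2 s2 b) = grp_ring_mult G (e2 s2 b) (e2 s1 a)"
    using sc e2_skew[OF a s(1)] e2_skew[OF b s(2)] unfolding skew_comm_def by blast
  have x: "a \<otimes> b \<in> carrier G" using a b by simp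
  have "inv a \<otimes> (a \<otimes> b) = b" using a b by (simp add: m_assoc[symmetric])
  moreover have "inv b \<otimes> (a \<otimes> b) \<noteq> a" using nc a b by (metis inv_solve_left m_closed)
  ultimately have "s1 * s2 = 0" using fun_cong[OF eq, of "a \<otimes> b"] mult_e2[OF x, of s1 a "e2 s2 b"]
     mult_e2[OF x, of s2 b "e2 s1 a"] by (simp add: e2_def)
  thus False using s by simp
qed

end

lemma dvd4_cases: assumes "(n::nat) dvd 4" shows "n = 1 \<or> n = 2 \<or> n = 4"
proof -
  have "n \<le> 4" "n > 0" using assms by (auto intro: dvd_imp_le intro!: Nat.gr0I)
  then have "n = 1 \<or> n = 2 \<or> n = 3 \<or> n = 4" by presburger
  then show ?thesis using assms by auto
qed

lemma dvd2_cases: assumes "(n::nat) dvd 2" shows "n = 1 \<or> n = 2"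
proof -
  have "n \<le> 2" "n > 0" using assms by (auto intro: dvd_imp_le intro!: Nat.gr0I)
  then show ?thesis by presburger
qed

lemma char_facts:
  assumes char2: "CHAR('r::comm_ring_1) \<noteq> 2" and R2: "\<exists>r::'r. 2 * r = 0 \<and> r \<noteq> 0"
  shows "(1::'r) \<noteq> 0" "(2::'r) \<noteq> 0" "(3::'r) \<noteq> 0" "(4::'r) = 0 \<Longrightarrow> CHAR('r) = 4"
proof -
  obtain r :: 'r where r: "2 * r = 0" "r \<noteq> 0" using R2 by auto
  show one: "(1::'r) \<noteq> 0" using r by auto
  show "(2::'r) \<noteq> 0"
  proof
    assume "(2::'r) = 0"
    then have "of_nat 2 = (0::'r)" by simp
    then have "CHAR('r) dvd 2" by (simp only: of_nat_eq_0_iff_char_dvd)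
    then have "CHAR('r) = 1 \<or> CHAR('r) = 2" by (rule dvd2_cases)
    then show False using char2 one by (metis of_nat_CHAR of_nat_1) 
  qed
  show "(3::'r) \<noteq> 0"
  proof
    assume "(3::'r) = 0"
    then have "3 * r = 0" by simp
    have "3 * r - 2 * r = (3 - 2) * r" by (simp only: left_diff_distrib)
    then have "3 * r - 2 * r = r" by simp
    then show False using \<open>3 * r = 0\<close> r by simp
  qed
  show "(4::'r) = 0 \<Longrightarrow> CHAR('r) = 4"
  proof -
    assume "(4::'r) = 0"
    then have "of_nat 4 = (0::'r)" by simp
    then have d: "CHAR('r) dvd 4" by (simp only: of_nat_eq_0_iff_char_dvd)
    have "CHAR('r) \<noteq> 1" using one by (metis of_nat_CHAR of_nat_1)
    then show "CHAR('r) = 4" using char2 dvd4_cases[OF d] by blast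
  qed
qed

lemma bool_eq_cases:
  assumes char2: "CHAR('r::comm_ring_1) \<noteq> 2" and R2: "\<exists>r::'r. 2 * r = 0 \<and> r \<noteq> 0"
    and e: "(1::'r) + of_bool A = of_bool D - of_bool B - of_bool C"
  shows "(D \<and> \<not> A \<and> \<not> B \<and> \<not> C) \<or> (A \<and> B \<and> C \<and> \<not> D \<and> CHAR('r) = 4)"
proof -
  note cf = char_facts[OF char2 R2]
  have e2: "(1::'r) + of_bool A + of_bool B + of_bool C - of_bool D = 0" using e by (simp add: algebra_simps)
  show ?thesis
  proof (cases A; cases B; cases C; cases D)
  qed (use e2 cf in \<open>simp_all add: algebra_simps\<close>)
qed

context group begin

lemma lemA:
  fixes R :: "'r::comm_ring_1 itself"
  assumes sc: "skew_comm G R" and char2: "CHAR('r) \<noteq> 2" and R2: "\<exists>r::'r. 2 * r = 0 \<and> r \<noteq> 0"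
    and g: "g \<in> carrier G" "g \<otimes> g \<noteq> \<one>" and h: "h \<in> carrier G" "h \<otimes> h \<noteq> \<one>"
    and nc: "g \<otimes> h \<noteq> h \<otimes> g"
  shows "CHAR('r) = 4 \<and> inv h \<otimes> (g \<otimes> h) = inv g \<and> h \<otimes> h = g \<otimes> g \<and> g \<otimes> g \<otimes> (g \<otimes> g) = \<one>"
proof -
  have eq: "grp_ring_mult G (e1 g) (e1 h) = (grp_ring_mult G (e1 h) (e1 g) :: 'a \<Rightarrow> 'r)"
    using sc e1_skew[OF g(1)] e1_skew[OF h(1)] unfolding skew_comm_def by blast
  have x: "g \<otimes> h \<in> carrier G" using g h by simp
  have 1: "inv g \<otimes> (g \<otimes> h) = h" using g h by (simp add: m_assoc[symmetric])
  have 2: "g \<otimes> (g \<otimes> h) \<noteq> h" using g h by (metis m_assoc l_one r_cancel one_closed m_closed)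
  have 3: "h \<noteq> inv h" using h by (metis r_inv)
  have 4: "inv h \<otimes> (g \<otimes> h) \<noteq> g" using nc g h by (metis inv_solve_left m_closed)
  have L: "grp_ring_mult G (e1 g) (e1 h) (g \<otimes> h) = (e1 h h - e1 h (g \<otimes> (g \<otimes> h)) :: 'r)"
    using mult_e1[OF g x, of "e1 h"] 1 by simp
  have R: "grp_ring_mult G (e1 h) (e1 g) (g \<otimes> h) = (e1 g (inv h \<otimes> (g \<otimes> h)) - e1 g (h \<otimes> (g \<otimes> h)) :: 'r)"
    using mult_e1[OF h x, of "e1 g"] by simp
  have L2: "(e1 h h - e1 h (g \<otimes> (g \<otimes> h)) :: 'r) = 1 + of_bool (g \<otimes> (g \<otimes> h) = inv h)"
    using 2 3 by (simp add: e1_def)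
  have R2': "(e1 g (inv h \<otimes> (g \<otimes> h)) - e1 g (h \<otimes> (g \<otimes> h)) :: 'r) = of_bool (h \<otimes> (g \<otimes> h) = inv g)
       - of_bool (inv h \<otimes> (g \<otimes> h) = inv g) - of_bool (h \<otimes> (g \<otimes> h) = g)"
    using 4 by (simp add: e1_def algebra_simps)
  have "(1::'r) + of_bool (g \<otimes> (g \<otimes> h) = inv h) = of_bool (h \<otimes> (g \<otimes> h) = inv g)
       - of_bool (inv h \<otimes> (g \<otimes> h) = inv g) - of_bool (h \<otimes> (g \<otimes> h) = g)"
    using fun_cong[OF eq, of "g \<otimes> h"] L R L2 R2' by simp
  from bool_eq_cases[OF char2 R2 this]
  consider (I) "h \<otimes> (g \<otimes> h) = inv g"
    | (II) "g \<otimes> (g \<otimes> h) = inv h" "inv h \<otimes> (g \<otimes> h) = inv g" "h \<otimes> (g \<otimes> h) = g" "CHAR('r) = 4"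
    by blast
  then show ?thesis
  proof cases
    case I
    define a where "a = g \<otimes> h"
    have a: "a \<in> carrier G" "a \<otimes> a = \<one>" using I g h unfolding a_def
      by (auto simp: m_assoc)
    have B1: "g \<otimes> a = a \<otimes> g \<or> a \<otimes> g \<otimes> a = inv g" by (rule lemB[OF sc R2 g a])
    have B2: "h \<otimes> a = a \<otimes> h \<or> a \<otimes> h \<otimes> a = inv h" by (rule lemB[OF sc R2 h a])
    have B1': "a \<otimes> g \<otimes> a = inv g" using B1 nc g h unfolding a_def
      by (metis l_cancel m_assoc m_closed)
    show ?thesis using B2 B1' I g h unfolding a_def
      by (smt (verit) l_inv m_assoc m_closed r_one)
  next
    case II
    have hh: "h \<otimes> h = g \<otimes> g" using II g h by (metis inv_solve_left' m_assoc m_closed)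
    have "g \<otimes> g \<otimes> (g \<otimes> g) = \<one>" using II(1) hh g h by (metis l_inv m_assoc m_closed)
    then show ?thesis using II hh by simp
  qed
qed

end

definition NN :: "('g,'m) monoid_scheme \<Rightarrow> 'g set" where
  "NN G = {g \<in> carrier G. g [^]\<^bsub>G\<^esub> (2::nat) \<noteq> \<one>\<^bsub>G\<^esub>}"

context group begin

lemma pow2: "g \<in> carrier G \<Longrightarrow> g [^] (2::nat) = g \<otimes> g"
  by (simp add: numeral_2_eq_2)

lemma pow4: "g \<in> carrier G \<Longrightarrow> g [^] (4::nat) = (g \<otimes> g) \<otimes> (g \<otimes> g)"
proof -
  assume g: "g \<in> carrier G"
  have "g [^] (4::nat) = g [^] (2::nat) \<otimes> g [^] (2::nat)" using g by (simp add: nat_pow_mult)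
  then show ?thesis using g by (simp add: numeral_2_eq_2)
qed

lemma NN_iff: "g \<in> NN G \<longleftrightarrow> g \<in> carrier G \<and> g \<otimes> g \<noteq> \<one>"
  by (auto simp: NN_def pow2)

lemma NN_sub: "NN G \<subseteq> carrier G" by (auto simp: NN_iff)

lemma comm_gen:
  assumes "S \<subseteq> carrier G" "c \<in> carrier G" "\<forall>s\<in>S. s \<otimes> c = c \<otimes> s" "k \<in> generate G S"
  shows "k \<otimes> c = c \<otimes> k"
  using assms(4)
proof (induction rule: generate.induct)
  case one then show ?case using assms by simp
next
  case (incl h) then show ?case using assms by auto
next
  case (inv h)
  have h: "h \<in> carrier G" "h \<otimes> c = c \<otimes> h" using inv assms by auto
  then show ?case using assms(2) by (simp add: inv_solve_left inv_solve_right m_assoc)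
next
  case (eng h1 h2)
  have c: "h1 \<in> carrier G" "h2 \<in> carrier G" using eng generate_in_carrier assms(1) by auto
  have i: "h1 \<otimes> c = c \<otimes> h1" "h2 \<otimes> c = c \<otimes> h2" using eng by auto
  show ?case using c i assms(2) by (metis m_assoc)
qed

lemma gen_abelian:
  assumes "S \<subseteq> carrier G" "\<forall>a\<in>S. \<forall>b\<in>S. a \<otimes> b = b \<otimes> a"
  shows "\<forall>a\<in>generate G S. \<forall>b\<in>generate G S. a \<otimes> b = b \<otimes> a"
proof (intro ballI)
  fix a b assume a: "a \<in> generate G S" and b: "b \<in> generate G S"
  have ac: "a \<in> carrier G" using a assms(1) generate_in_carrier by auto
  have "\<forall>s\<in>S. s \<otimes> a = a \<otimes> s"
    using comm_gen[OF assms(1) _ _ a] assms by auto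
  then have "b \<otimes> a = a \<otimes> b" using comm_gen[OF assms(1) ac _ b] by simp
  then show "a \<otimes> b = b \<otimes> a" by simp
qed

lemma subgroup_two:
  assumes "x \<in> carrier G" "x \<otimes> x = \<one>"
  shows "subgroup {\<one>, x} G"
proof -
  have "inv x = x" using assms by (simp add: inv_equality)
  show ?thesis
  proof (rule subgroupI)
    show "{\<one>, x} \<subseteq> carrier G" using assms by simp
    show "{\<one>, x} \<noteq> {}" by simp
    show "\<And>a. a \<in> {\<one>, x} \<Longrightarrow> inv a \<in> {\<one>, x}" using \<open>inv x = x\<close> by auto
    show "\<And>a b. a \<in> {\<one>, x} \<Longrightarrow> b \<in> {\<one>, x} \<Longrightarrow> a \<otimes> b \<in> {\<one>, x}"
      using assms by auto
  qed
qed

lemma generate_two: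
  assumes "x \<in> carrier G" "x \<otimes> x = \<one>"
  shows "generate G {x} = {\<one>, x}"
proof
  show "generate G {x} \<subseteq> {\<one>, x}"
    by (rule generate_subgroup_incl[OF _ subgroup_two[OF assms]]) auto
  show "{\<one>, x} \<subseteq> generate G {x}" by (auto intro: generate.one generate.incl)
qed

lemma all_inv_abelian:
  assumes "\<forall>g\<in>carrier G. g \<otimes> g = \<one>"
  shows "comm_group G"
proof (rule group_comm_groupI)
  fix a b assume a: "a \<in> carrier G" and b: "b \<in> carrier G"
  have "inv a = a" "inv b = b" "inv (a \<otimes> b) = a \<otimes> b"
    using a b assms by (simp_all add: inv_equality)
  then show "a \<otimes> b = b \<otimes> a" using a b by (metis inv_mult_group)
qed

end

context group begin

lemma outside_inverts:
  fixes R :: "'r::comm_ring_1 itself"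
  assumes sc: "skew_comm G R" and R2: "\<exists>r::'r. 2 * r = 0 \<and> r \<noteq> 0"
    and abelN: "\<forall>a\<in>NN G. \<forall>b\<in>NN G. a \<otimes> b = b \<otimes> a"
    and u: "u \<in> carrier G" "u \<notin> generate G (NN G)"
  shows "u \<otimes> u = \<one>" "\<forall>k\<in>generate G (NN G). u \<otimes> k \<otimes> u = inv k"
proof -
  let ?K = "generate G (NN G)"
  show uu: "u \<otimes> u = \<one>" using u generate.incl[of u "NN G" G] by (auto simp: NN_iff)
  have Kab: "\<forall>a\<in>?K. \<forall>b\<in>?K. a \<otimes> b = b \<otimes> a" using gen_abelian[OF NN_sub abelN] .
  have onN: "u \<otimes> n \<otimes> u = inv n" if n: "n \<in> NN G" for n
  proof -
    have nc: "n \<in> carrier G" "n \<otimes> n \<noteq> \<one>" using n by (auto simp: NN_iff)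
    have "n \<otimes> u = u \<otimes> n \<or> u \<otimes> n \<otimes> u = inv n" by (rule lemB[OF sc R2 nc u(1) uu])
    moreover have "n \<otimes> u \<noteq> u \<otimes> n"
    proof
      assume c: "n \<otimes> u = u \<otimes> n"
      have "(u \<otimes> n) \<otimes> (u \<otimes> n) \<noteq> \<one>" using c nc u uu by (metis l_one m_assoc m_closed)
      then have "u \<otimes> n \<in> ?K" using nc u by (auto simp: NN_iff intro: generate.incl)
      moreover have "inv n \<in> ?K" using n by (rule generate.inv)
      ultimately have "(u \<otimes> n) \<otimes> inv n \<in> ?K" by (rule generate.eng)
      moreover have "(u \<otimes> n) \<otimes> inv n = u" using nc u by (simp add: m_assoc)
      ultimately show False using u by simp
    qed
    ultimately show ?thesis by simp
  qed
  show "\<forall>k\<in>?K. u \<otimes> k \<otimes> u = inv k"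
  proof
    fix k assume "k \<in> ?K"
    then show "u \<otimes> k \<otimes> u = inv k"
    proof (induction rule: generate.induct)
      case one then show ?case using uu u by simp
    next
      case (incl h) then show ?case using onN by simp
    next
      case (inv h)
      have hc: "h \<in> carrier G" using inv by (auto simp: NN_iff)
      have "u \<otimes> h \<otimes> u = inv h" using onN inv by simp
      then show ?case using hc u uu by (metis conjugation_is_surj inv_inv local.inv_equality)
    next
      case (eng h1 h2)
      have c: "h1 \<in> carrier G" "h2 \<in> carrier G" using eng generate_in_carrier NN_sub by auto
      have ab: "h1 \<otimes> h2 = h2 \<otimes> h1" using Kab eng by auto
      have i: "u \<otimes> h1 \<otimes> u = inv h1" "u \<otimes> h2 \<otimes> u = inv h2" using eng by auto
      show ?case using c ab i u uu by (metis inv_mult_group m_assoc m_closed r_cancel_one')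
    qed
  qed
qed

lemma NN_nonempty:
  assumes nonab: "\<not> comm_group G" shows "NN G \<noteq> {}"
proof
  assume "NN G = {}"
  then have "\<forall>g\<in>carrier G. g \<otimes> g = \<one>" using NN_iff by blast
  then show False using all_inv_abelian nonab by blast
qed

lemma case1_forward:
  fixes R :: "'r::comm_ring_1 itself"
  assumes sc: "skew_comm G R" and R2: "\<exists>r::'r. 2 * r = 0 \<and> r \<noteq> 0"
    and nonab: "\<not> comm_group G"
    and abelN: "\<forall>a\<in>NN G. \<forall>b\<in>NN G. a \<otimes> b = b \<otimes> a"
  shows "(let K = generate G (NN G) in
        (\<forall>a\<in>K. \<forall>b\<in>K. a \<otimes> b = b \<otimes> a) \<and>
        (\<exists>x\<in>carrier G. x \<otimes> x = \<one> \<and>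
           K \<lhd> G \<and>
           K \<inter> generate G {x} = {\<one>} \<and>
           K <#> generate G {x} = carrier G \<and>
           (\<forall>k\<in>K. x \<otimes> k \<otimes> x = inv k)) \<and>
        (\<forall>r1 r2 :: 'r. 2 * r1 = 0 \<and> 2 * r2 = 0 \<longrightarrow> r1 * r2 = 0))"
proof -
  let ?K = "generate G (NN G)"
  have Kab: "\<forall>a\<in>?K. \<forall>b\<in>?K. a \<otimes> b = b \<otimes> a" using gen_abelian[OF NN_sub abelN] .
  have Ksub: "?K \<subseteq> carrier G" by (rule generate_incl[OF NN_sub])
  obtain x where x: "x \<in> carrier G" "x \<notin> ?K"
  proof -
    have "\<not> carrier G \<subseteq> ?K"
    proof
      assume "carrier G \<subseteq> ?K"
      then have "comm_group G" using Kab by (intro group_comm_groupI) auto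
      then show False using nonab by simp
    qed
    then show ?thesis using that by auto
  qed
  note xo = outside_inverts[OF sc R2 abelN x]
  obtain n where n: "n \<in> NN G" using NN_nonempty[OF nonab] by auto
  have nc: "n \<in> carrier G" "n \<otimes> n \<noteq> \<one>" using n by (auto simp: NN_iff)
  have nK: "n \<in> ?K" using n by (rule generate.incl)
  have normal: "?K \<lhd> G"
  proof (rule normal_generateI[OF NN_sub])
    fix h g assume h: "h \<in> NN G" and g: "g \<in> carrier G"
    have hc: "h \<in> carrier G" "h \<otimes> h \<noteq> \<one>" using h by (auto simp: NN_iff)
    have "(g \<otimes> h \<otimes> inv g) \<otimes> (g \<otimes> h \<otimes> inv g) \<noteq> \<one>" using hc g by (smt (verit) inv_closed m_assoc r_inv r_one subgroupE(4) subgroup_self)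
    then show "g \<otimes> h \<otimes> inv g \<in> NN G" using hc g by (auto simp: NN_iff)
  qed
  have gx: "generate G {x} = {\<one>, x}" by (rule generate_two[OF x(1) xo(1)])
  have inter: "?K \<inter> generate G {x} = {\<one>}" using gx x generate.one[of G "NN G"] by auto
  have prod: "?K <#> generate G {x} = carrier G"
  proof
    show "?K <#> generate G {x} \<subseteq> carrier G" using Ksub gx x by (auto simp: set_mult_def)
  next
    show "carrier G \<subseteq> ?K <#> generate G {x}"
    proof
      fix y assume y: "y \<in> carrier G"
      show "y \<in> ?K <#> generate G {x}"
      proof (cases "y \<in> ?K")
        case True
        have "y = y \<otimes> \<one>" using y by simp
        then show ?thesis unfolding gx set_mult_def using True by blast
      next
        case False
        note yo = outside_inverts[OF sc R2 abelN y False]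
        have yx: "y \<otimes> x \<in> ?K"
        proof (rule ccontr)
          assume nyx: "y \<otimes> x \<notin> ?K"
          note yxo = outside_inverts[OF sc R2 abelN _ nyx]
          have a1: "y \<otimes> n \<otimes> y = inv n" using yo nK by auto
          have a2: "x \<otimes> n \<otimes> x = inv n" using xo nK by auto
          have a3: "(y \<otimes> x) \<otimes> n \<otimes> (y \<otimes> x) = inv n" using yxo y x nK by auto
          have a4: "(y \<otimes> x) \<otimes> (y \<otimes> x) = \<one>" using yxo y x by auto
          show False using a1 a2 a3 a4 yo(1) xo(1) y x nc by (metis inv_solve_left l_inv m_assoc m_closed)
        qed
        have "y = (y \<otimes> x) \<otimes> x" using y x xo(1) by (simp add: m_assoc)
        then show ?thesis unfolding gx set_mult_def using yx by blast
      qed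
    qed
  qed
  have R22: "\<forall>r1 r2 :: 'r. 2 * r1 = 0 \<and> 2 * r2 = 0 \<longrightarrow> r1 * r2 = 0"
  proof (intro allI impI, rule ccontr)
    fix r1 r2 :: 'r assume r: "2 * r1 = 0 \<and> 2 * r2 = 0" and nz: "r1 * r2 \<noteq> 0"
    have a2: "x \<otimes> n \<otimes> x = inv n" using xo nK by auto
    have xn1: "x \<otimes> n \<in> carrier G" using x nc by simp
    have xn2: "(x \<otimes> n) \<otimes> (x \<otimes> n) = \<one>" using a2 x(1) nc(1) by (metis l_inv m_assoc m_closed)
    note xn = xn1 xn2
    have "x \<otimes> (x \<otimes> n) = (x \<otimes> n) \<otimes> x" using lemC[OF sc _ _ nz x(1) xo(1) xn] r by auto
    then show False using a2 x nc xo(1) by (metis l_one m_assoc r_inv)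
  qed
  show ?thesis unfolding Let_def
    using Kab x xo normal inter prod R22 by blast
qed

end

context group begin

lemma h_anc: "u \<in> carrier G \<Longrightarrow> g0 \<in> carrier G \<Longrightarrow> h0 \<in> carrier G \<Longrightarrow> u \<otimes> g0 = g0 \<otimes> u \<Longrightarrow> u \<otimes> h0 = h0 \<otimes> u \<Longrightarrow> g0 \<otimes> h0 \<noteq> h0 \<otimes> g0 \<Longrightarrow> (u \<otimes> g0) \<otimes> h0 \<noteq> h0 \<otimes> (u \<otimes> g0)"
  by (metis (no_types, lifting) m_assoc m_closed r_cancel)
lemma h_aa: "u \<in> carrier G \<Longrightarrow> g0 \<in> carrier G \<Longrightarrow> u \<otimes> g0 = g0 \<otimes> u \<Longrightarrow> (u \<otimes> g0) \<otimes> (u \<otimes> g0) = (u \<otimes> u) \<otimes> (g0 \<otimes> g0)"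
  by (metis m_assoc m_closed)
lemma h_uz: "u \<in> carrier G \<Longrightarrow> z \<in> carrier G \<Longrightarrow> z \<otimes> z = \<one> \<Longrightarrow> (u \<otimes> u) \<otimes> z = \<one> \<Longrightarrow> u \<otimes> u = z"
  by (metis m_closed r_cancel)
lemma h_c1: "a \<in> carrier G \<Longrightarrow> b \<in> carrier G \<Longrightarrow> a \<otimes> b = b \<otimes> a \<Longrightarrow> a \<otimes> b \<otimes> inv a \<otimes> inv b = \<one>"
  by (metis inv_solve_right m_closed r_inv)
lemma h_NN: "a \<in> carrier G \<Longrightarrow> b \<in> carrier G \<Longrightarrow> z \<in> carrier G \<Longrightarrow> z \<otimes> z = \<one> \<Longrightarrow> inv b \<otimes> (a \<otimes> b) = inv a \<Longrightarrow> a \<otimes> a = z \<Longrightarrow> b \<otimes> b = z \<Longrightarrow> a \<otimes> b \<otimes> inv a \<otimes> inv b = z"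
  by (metis inv_closed inv_solve_left inv_solve_right m_assoc m_closed)
lemma h_NI: "a \<in> carrier G \<Longrightarrow> b \<in> carrier G \<Longrightarrow> z \<in> carrier G \<Longrightarrow> b \<otimes> b = \<one> \<Longrightarrow> b \<otimes> a \<otimes> b = inv a \<Longrightarrow> a \<otimes> a = z \<Longrightarrow> a \<otimes> b \<otimes> inv a \<otimes> inv b = z"
  by (metis conjugation_is_surj local.inv_equality m_assoc m_closed)
lemma h_IN: "a \<in> carrier G \<Longrightarrow> b \<in> carrier G \<Longrightarrow> z \<in> carrier G \<Longrightarrow> z \<otimes> z = \<one> \<Longrightarrow> a \<otimes> a = \<one> \<Longrightarrow> a \<otimes> b \<otimes> a = inv b \<Longrightarrow> b \<otimes> b = z \<Longrightarrow> a \<otimes> b \<otimes> inv a \<otimes> inv b = z"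
  by (metis inv_char inv_mult_group)
lemma h_II: "a \<in> carrier G \<Longrightarrow> b \<in> carrier G \<Longrightarrow> a \<otimes> a = \<one> \<Longrightarrow> b \<otimes> b = \<one> \<Longrightarrow> a \<otimes> b \<otimes> inv a \<otimes> inv b = (a \<otimes> b) \<otimes> (a \<otimes> b)"
  by (simp add: inv_char m_assoc)
lemma h_g0h0: "g0 \<in> carrier G \<Longrightarrow> h0 \<in> carrier G \<Longrightarrow> inv h0 \<otimes> (g0 \<otimes> h0) = inv g0 \<Longrightarrow> h0 \<otimes> h0 = g0 \<otimes> g0 \<Longrightarrow> g0 \<otimes> g0 \<otimes> (g0 \<otimes> g0) = \<one> \<Longrightarrow> g0 \<otimes> h0 \<otimes> inv g0 \<otimes> inv h0 = g0 \<otimes> g0"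
  by (metis conjugation_is_surj inv_closed m_assoc m_closed)

lemma case2_forward:
  fixes R :: "'r::comm_ring_1 itself"
  assumes sc: "skew_comm G R" and char2: "CHAR('r) \<noteq> 2" and R2: "\<exists>r::'r. 2 * r = 0 \<and> r \<noteq> 0"
    and g0: "g0 \<in> carrier G" "g0 \<otimes> g0 \<noteq> \<one>" and h0: "h0 \<in> carrier G" "h0 \<otimes> h0 \<noteq> \<one>"
    and nc0: "g0 \<otimes> h0 \<noteq> h0 \<otimes> g0"
  shows "CHAR('r) = 4 \<and> group_exponent G 4 \<and>
      (\<exists>c\<in>carrier G. derived G (carrier G) = generate G {c}) \<and>
      card (derived G (carrier G)) = 2 \<and>
      (\<forall>a\<in>carrier (G Mod derived G (carrier G)).
          a \<otimes>\<^bsub>G Mod derived G (carrier G)\<^esub> a = \<one>\<^bsub>G Mod derived G (carrier G)\<^esub>) \<and>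
      ((\<exists>r1 r2 :: 'r. 2 * r1 = 0 \<and> 2 * r2 = 0 \<and> r1 * r2 \<noteq> 0) \<longrightarrow>
         (\<forall>a\<in>carrier G. \<forall>b\<in>carrier G. ord a = 2 \<and> ord b = 2 \<longrightarrow> a \<otimes> b = b \<otimes> a))"
proof -
  define z where "z = g0 \<otimes> g0"
  note A0 = lemA[OF sc char2 R2 g0 h0 nc0]
  have zc: "z \<in> carrier G" using g0 by (simp add: z_def)
  have zz: "z \<otimes> z = \<one>" using A0 by (simp add: z_def)
  have z1: "z \<noteq> \<one>" using g0 by (simp add: z_def)
  have hz: "h0 \<otimes> h0 = z" using A0 by (simp add: z_def)
  have iz: "inv z = z" using zz zc by (simp add: inv_equality)
  have sqN: "u \<otimes> u = z" if u: "u \<in> carrier G" "u \<otimes> u \<noteq> \<one>" for u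
  proof (cases "u \<otimes> g0 = g0 \<otimes> u")
    case False
    then show ?thesis using lemA[OF sc char2 R2 u g0 False] by (simp add: z_def)
  next
    case c1: True
    show ?thesis
    proof (cases "u \<otimes> h0 = h0 \<otimes> u")
      case False
      then show ?thesis using lemA[OF sc char2 R2 u h0 False] hz by simp
    next
      case c2: True
      define a where "a = u \<otimes> g0"
      have ac: "a \<in> carrier G" using u g0 by (simp add: a_def)
      have anc: "a \<otimes> h0 \<noteq> h0 \<otimes> a" unfolding a_def by (rule h_anc[OF u(1) g0(1) h0(1) c1 c2 nc0])
      have aa: "a \<otimes> a = (u \<otimes> u) \<otimes> z" unfolding a_def z_def by (rule h_aa[OF u(1) g0(1) c1])
      show ?thesis
      proof (cases "a \<otimes> a = \<one>")
        case True
        then show ?thesis using aa zz u zc h_uz by simp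
      next
        case False
        have "h0 \<otimes> h0 = a \<otimes> a" using lemA[OF sc char2 R2 ac False h0 anc] by simp
        then have "u \<otimes> u = \<one>" using aa hz u zc by simp
        then show ?thesis using u by simp
      qed
    qed
  qed
  have sq: "u \<otimes> u \<in> {\<one>, z}" if "u \<in> carrier G" for u
    using sqN[OF that] by auto
  have comm: "a \<otimes> b \<otimes> inv a \<otimes> inv b \<in> {\<one>, z}" if a: "a \<in> carrier G" and b: "b \<in> carrier G" for a b
  proof (cases "a \<otimes> b = b \<otimes> a")
    case True
    then show ?thesis using a b h_c1 by simp
  next
    case nc: False
    consider (NN) "a \<otimes> a \<noteq> \<one>" "b \<otimes> b \<noteq> \<one>" | (NI) "a \<otimes> a \<noteq> \<one>" "b \<otimes> b = \<one>"
      | (IN) "a \<otimes> a = \<one>" "b \<otimes> b \<noteq> \<one>" | (II) "a \<otimes> a = \<one>" "b \<otimes> b = \<one>" by blast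
    then show ?thesis
    proof cases
      case NN
      have "inv b \<otimes> (a \<otimes> b) = inv a" using lemA[OF sc char2 R2 a NN(1) b NN(2) nc] by simp
      moreover have "a \<otimes> a = z" "b \<otimes> b = z" using sqN a b NN by auto
      ultimately have "a \<otimes> b \<otimes> inv a \<otimes> inv b = z" using a b zz zc by (intro h_NN)
      then show ?thesis by simp
    next
      case NI
      have "b \<otimes> a \<otimes> b = inv a" using lemB[OF sc R2 a NI(1) b NI(2)] nc by auto
      moreover have "a \<otimes> a = z" using sqN a NI by auto
      ultimately have "a \<otimes> b \<otimes> inv a \<otimes> inv b = z" using a b NI zz zc by (intro h_NI)
      then show ?thesis by simp
    next
      case IN
      have "a \<otimes> b \<otimes> a = inv b" using lemB[OF sc R2 b IN(2) a IN(1)] nc by auto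
      moreover have "b \<otimes> b = z" using sqN b IN by auto
      ultimately have "a \<otimes> b \<otimes> inv a \<otimes> inv b = z" using a b IN zz zc by (intro h_IN)
      then show ?thesis by simp
    next
      case II
      have "a \<otimes> b \<otimes> inv a \<otimes> inv b = (a \<otimes> b) \<otimes> (a \<otimes> b)" using a b II by (intro h_II)
      then show ?thesis using sq[of "a \<otimes> b"] a b by simp
    qed
  qed
  have gz: "generate G {z} = {\<one>, z}" by (rule generate_two[OF zc zz])
  have der: "derived G (carrier G) = {\<one>, z}"
  proof
    show "derived G (carrier G) \<subseteq> {\<one>, z}"
      unfolding derived_def
      by (rule generate_subgroup_incl[OF _ subgroup_two[OF zc zz]]) (use comm in blast)
    have a1: "inv h0 \<otimes> (g0 \<otimes> h0) = inv g0" "h0 \<otimes> h0 = g0 \<otimes> g0" "g0 \<otimes> g0 \<otimes> (g0 \<otimes> g0) = \<one>" using A0 by auto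
    have "g0 \<otimes> h0 \<otimes> inv g0 \<otimes> inv h0 = z" using a1 g0(1) h0(1) unfolding z_def by (intro h_g0h0)
    then have "z \<in> derived_set G (carrier G)" using g0 h0 by blast
    then have "z \<in> derived G (carrier G)" unfolding derived_def by (rule generate.incl)
    then show "{\<one>, z} \<subseteq> derived G (carrier G)" unfolding derived_def by (auto intro: generate.one)
  qed
  have card2: "card (derived G (carrier G)) = 2" using der z1 by simp
  have expo: "group_exponent G 4"
    unfolding group_exponent_def
  proof (intro conjI allI impI)
    show "(0::nat) < 4" by simp
    show "\<forall>g\<in>carrier G. g [^] (4::nat) = \<one>"
    proof
      fix g assume g: "g \<in> carrier G"
      show "g [^] (4::nat) = \<one>" using sq[OF g] zz g by (auto simp: pow4)
    qed
    fix m :: nat assume m: "0 < m \<and> (\<forall>g\<in>carrier G. g [^] m = \<one>)"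
    have o4: "ord g0 dvd 4" using g0 zz by (simp add: pow_eq_id[symmetric] pow4 z_def)
    have "ord g0 \<noteq> 1" using g0 ord_eq_1 by auto
    moreover have "ord g0 \<noteq> 2"
    proof
      assume o: "ord g0 = 2"
      have "g0 [^] ord g0 = \<one>" using g0 by simp
      then have "g0 [^] (2::nat) = \<one>" using o by simp
      then show False using g0 by (simp add: pow2)
    qed
    ultimately have "ord g0 = 4" using dvd4_cases[OF o4] by auto
    moreover have "ord g0 dvd m" using m g0 by (simp add: pow_eq_id[symmetric])
    ultimately show "4 \<le> m" using m by (metis dvd_imp_le)
  qed
  have quot: "\<forall>a\<in>carrier (G Mod derived G (carrier G)).
          a \<otimes>\<^bsub>G Mod derived G (carrier G)\<^esub> a = \<one>\<^bsub>G Mod derived G (carrier G)\<^esub>"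
  proof
    fix a assume "a \<in> carrier (G Mod derived G (carrier G))"
    then obtain u where u: "u \<in> carrier G" and au: "a = derived G (carrier G) #> u"
      unfolding carrier_FactGroup by auto
    have nrm: "derived G (carrier G) \<lhd> G" by (rule derived_self_is_normal)
    have "a \<otimes>\<^bsub>G Mod derived G (carrier G)\<^esub> a = derived G (carrier G) #> (u \<otimes> u)"
      using normal.rcos_sum[OF nrm u u] au by simp
    also have "\<dots> = derived G (carrier G)"
      using subgroup.rcos_const[OF normal_imp_subgroup[OF nrm] is_group] sq[OF u] der by auto
    finally show "a \<otimes>\<^bsub>G Mod derived G (carrier G)\<^esub> a = \<one>\<^bsub>G Mod derived G (carrier G)\<^esub>" by simp
  qed
  have invc: "(\<exists>r1 r2 :: 'r. 2 * r1 = 0 \<and> 2 * r2 = 0 \<and> r1 * r2 \<noteq> 0) \<longrightarrow>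
         (\<forall>a\<in>carrier G. \<forall>b\<in>carrier G. ord a = 2 \<and> ord b = 2 \<longrightarrow> a \<otimes> b = b \<otimes> a)"
  proof (intro impI ballI)
    fix a b assume "\<exists>r1 r2 :: 'r. 2 * r1 = 0 \<and> 2 * r2 = 0 \<and> r1 * r2 \<noteq> 0"
      and a: "a \<in> carrier G" and b: "b \<in> carrier G" and o: "ord a = 2 \<and> ord b = 2"
    then obtain r1 r2 :: 'r where r: "2 * r1 = 0" "2 * r2 = 0" "r1 * r2 \<noteq> 0" by blast
    have "a \<otimes> a = \<one>" "b \<otimes> b = \<one>" using pow_ord_eq_1[OF a] pow_ord_eq_1[OF b] o a b by (auto simp: pow2)
    then show "a \<otimes> b = b \<otimes> a" using lemC[OF sc r a _ b] by simp
  qed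
  show ?thesis using A0 expo der gz zc card2 quot invc by auto
qed

end

lemma sum_pairing:
  assumes "finite S" "\<forall>y\<in>S. \<sigma> y \<in> S \<and> \<sigma> (\<sigma> y) = y \<and> \<sigma> y \<noteq> y"
    "\<forall>y\<in>S. f y + f (\<sigma> y) = (0::'r::comm_ring_1)"
  shows "sum f S = 0"
  using assms
proof (induction "card S" arbitrary: S rule: less_induct)
  case less
  show ?case
  proof (cases "S = {}")
    case True then show ?thesis by simp
  next
    case False
    then obtain y where y: "y \<in> S" by auto
    let ?S' = "S - {y, \<sigma> y}"
    have sy: "\<sigma> y \<in> S" "\<sigma> y \<noteq> y" using less.prems y by auto
    have fin: "finite ?S'" using less.prems by simp
    have ssy: "\<sigma> (\<sigma> y) = y" using less.prems(2) y by auto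
    have cl: "\<forall>u\<in>?S'. \<sigma> u \<in> ?S' \<and> \<sigma> (\<sigma> u) = u \<and> \<sigma> u \<noteq> u"
    proof
      fix u assume u: "u \<in> ?S'"
      then have u1: "u \<in> S" "u \<noteq> y" "u \<noteq> \<sigma> y" by auto
      have h: "\<sigma> u \<in> S" "\<sigma> (\<sigma> u) = u" "\<sigma> u \<noteq> u" using less.prems(2) u1(1) by auto
      have "\<sigma> u \<noteq> y" using h(2) u1(3) by auto
      moreover have "\<sigma> u \<noteq> \<sigma> y" using h(2) ssy u1(2) by metis
      ultimately show "\<sigma> u \<in> ?S' \<and> \<sigma> (\<sigma> u) = u \<and> \<sigma> u \<noteq> u" using h by auto
    qed
    have "?S' \<subset> S" using y by blast
    then have lt: "card ?S' < card S" using less.prems(1) by (rule psubset_card_mono[rotated])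
    have "sum f ?S' = 0" using less.hyps[OF lt fin cl] less.prems(3) by auto
    moreover have "sum f S = f y + f (\<sigma> y) + sum f ?S'"
    proof -
      have "S = insert y (insert (\<sigma> y) ?S')" using y sy by auto
      then have "sum f S = sum f (insert y (insert (\<sigma> y) ?S'))" by simp
      also have "\<dots> = f y + (f (\<sigma> y) + sum f ?S')" using fin sy by simp
      finally show ?thesis by (simp add: add.assoc)
    qed
    ultimately show ?thesis using less.prems(3) y by simp
  qed
qed

context group begin

lemma skew_inv:
  assumes "\<alpha> \<in> grp_ring_skew G" "u \<in> carrier G"
  shows "\<alpha> (inv u) = - (\<alpha> u :: 'r::comm_ring_1)"
  using assms fun_cong[of "grp_ring_star G \<alpha>" "\<lambda>x. - \<alpha> x" u]
  unfolding grp_ring_skew_def grp_ring_star_def by auto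

lemma skew_out:
  assumes "\<alpha> \<in> grp_ring_skew G" "u \<notin> carrier G"
  shows "\<alpha> u = (0::'r::comm_ring_1)"
  using assms unfolding grp_ring_skew_def grp_ring_def by auto

lemma skew_R2:
  assumes "\<alpha> \<in> grp_ring_skew G" "u \<in> carrier G" "u \<otimes> u = \<one>"
  shows "2 * (\<alpha> u :: 'r::comm_ring_1) = 0"
proof -
  have "inv u = u" using assms by (simp add: inv_equality)
  then have "\<alpha> u = - \<alpha> u" using skew_inv[OF assms(1,2)] by simp
  then show ?thesis by (metis add_eq_0_iff2 mult_2 neg_equal_iff_equal)
qed

lemma skew_fin:
  assumes "\<alpha> \<in> grp_ring_skew G"
  shows "finite {g. \<alpha> g \<noteq> 0}" "{g. \<alpha> g \<noteq> 0} \<subseteq> carrier G"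
  using assms unfolding grp_ring_skew_def grp_ring_def by auto

lemma mult_swap:
  assumes a: "\<alpha> \<in> grp_ring_skew G" and b: "\<beta> \<in> grp_ring_skew G" and x: "x \<in> carrier G"
  shows "grp_ring_mult G \<beta> \<alpha> x = (\<Sum>y\<in>{g. \<alpha> g \<noteq> 0}. \<alpha> y * (\<beta> (x \<otimes> inv y) :: 'r::comm_ring_1))"
proof -
  let ?A = "{g. \<alpha> g \<noteq> 0}" and ?B = "{g. \<beta> g \<noteq> 0}"
  let ?p = "\<lambda>y. inv y \<otimes> x"
  let ?f = "\<lambda>w. \<alpha> w * \<beta> (x \<otimes> inv w)"
  note A = skew_fin[OF a] and B = skew_fin[OF b]
  have "grp_ring_mult G \<beta> \<alpha> x = (\<Sum>y\<in>?B. \<beta> y * \<alpha> (inv y \<otimes> x))"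
    using x by (simp add: grp_ring_mult_def)
  also have "\<dots> = (\<Sum>y\<in>?B. ?f (?p y))"
  proof (rule sum.cong)
    fix y assume "y \<in> ?B"
    then have y: "y \<in> carrier G" using B by auto
    have "x \<otimes> inv (inv y \<otimes> x) = y" using x y by (simp add: inv_mult_group m_assoc[symmetric])
    then show "\<beta> y * \<alpha> (inv y \<otimes> x) = ?f (?p y)" by (simp add: mult.commute)
  qed simp
  also have "\<dots> = (\<Sum>w\<in>?p ` ?B. ?f w)"
  proof -
    have inj: "inj_on ?p ?B"
    proof
      fix u v assume "u \<in> ?B" "v \<in> ?B" "inv u \<otimes> x = inv v \<otimes> x"
      then show "u = v" using B x by (metis inv_inv r_cancel inv_closed subsetD)
    qed
    show ?thesis using sum.reindex[OF inj, of ?f] by (simp add: o_def)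
  qed
  also have "\<dots> = (\<Sum>w\<in>?A \<union> ?p ` ?B. ?f w)"
  proof (rule sum.mono_neutral_left)
    show "finite (?A \<union> ?p ` ?B)" using A B by simp
    show "?p ` ?B \<subseteq> ?A \<union> ?p ` ?B" by blast
    show "\<forall>w\<in>?A \<union> ?p ` ?B - ?p ` ?B. ?f w = 0"
    proof
      fix w assume w: "w \<in> ?A \<union> ?p ` ?B - ?p ` ?B"
      then have wc: "w \<in> carrier G" using A by blast
      have "\<beta> (x \<otimes> inv w) = 0"
      proof (rule ccontr)
        assume nz: "\<beta> (x \<otimes> inv w) \<noteq> 0"
        have "?p (x \<otimes> inv w) = w" using x wc by (simp add: inv_mult_group m_assoc)
        then have "w \<in> ?p ` ?B" using nz by (metis (mono_tags, lifting) image_eqI mem_Collect_eq)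
        then show False using w by blast
      qed
      then show "?f w = 0" by simp
    qed
  qed
  also have "\<dots> = (\<Sum>w\<in>?A. ?f w)"
  proof (rule sum.mono_neutral_right)
    show "finite (?A \<union> ?p ` ?B)" using A B by simp
    show "?A \<subseteq> ?A \<union> ?p ` ?B" by blast
    show "\<forall>w\<in>?A \<union> ?p ` ?B - ?A. ?f w = 0" by simp
  qed
  finally show ?thesis .
qed

lemma neg2: "2 * b = (0::'r::comm_ring_1) \<Longrightarrow> - b = b"
  by (metis add_eq_0_iff2 mult_2)

lemma skew_comm_I:
  assumes "\<And>\<alpha> \<beta> x. \<alpha> \<in> grp_ring_skew G \<Longrightarrow> \<beta> \<in> grp_ring_skew G \<Longrightarrow> x \<in> carrier G \<Longrightarrow>
     (\<Sum>y\<in>{g. \<alpha> g \<noteq> 0}. \<alpha> y * (\<beta> (inv y \<otimes> x) :: 'r::comm_ring_1)) = (\<Sum>y\<in>{g. \<alpha> g \<noteq> 0}. \<alpha> y * \<beta> (x \<otimes> inv y))"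
  shows "skew_comm G (TYPE('r))"
  unfolding skew_comm_def
proof (intro allI impI)
  fix \<alpha> \<beta> :: "'a \<Rightarrow> 'r" assume ab: "\<alpha> \<in> grp_ring_skew G \<and> \<beta> \<in> grp_ring_skew G"
  show "grp_ring_mult G \<alpha> \<beta> = grp_ring_mult G \<beta> \<alpha>"
  proof
    fix x show "grp_ring_mult G \<alpha> \<beta> x = grp_ring_mult G \<beta> \<alpha> x"
    proof (cases "x \<in> carrier G")
      case True
      then show ?thesis using assms[of \<alpha> \<beta> x] ab mult_swap[of \<alpha> \<beta> x]
        by (simp add: grp_ring_mult_def)
    next
      case False
      then show ?thesis by (simp add: grp_ring_mult_def)
    qed
  qed
qed

lemma case1_point:
  fixes \<alpha> \<beta> :: "'a \<Rightarrow> 'r::comm_ring_1"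
  assumes Ksg: "subgroup K G" and Kab: "\<forall>a\<in>K. \<forall>b\<in>K. a \<otimes> b = b \<otimes> a"
    and F1: "\<forall>u\<in>carrier G. u \<notin> K \<longrightarrow> u \<otimes> u = \<one>"
    and F2: "\<forall>u\<in>carrier G. u \<notin> K \<longrightarrow> (\<forall>k\<in>K. u \<otimes> k = inv k \<otimes> u)"
    and R22: "\<forall>r1 r2 :: 'r. 2 * r1 = 0 \<and> 2 * r2 = 0 \<longrightarrow> r1 * r2 = 0"
    and a: "\<alpha> \<in> grp_ring_skew G" and b: "\<beta> \<in> grp_ring_skew G"
    and x: "x \<in> carrier G" and y: "y \<in> carrier G"
  shows "\<alpha> y * \<beta> (inv y \<otimes> x) =
     \<alpha> (if y \<in> K \<and> x \<notin> K then inv y else y) * \<beta> (x \<otimes> inv (if y \<in> K \<and> x \<notin> K then inv y else y))"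
proof -
  note sg = subgroup.m_closed[OF Ksg] subgroup.m_inv_closed[OF Ksg]
  consider (ca) "y \<in> K" "x \<in> K" | (cb) "y \<in> K" "x \<notin> K" | (cc) "y \<notin> K" "x \<in> K" | (cd) "y \<notin> K" "x \<notin> K"
    by blast
  then show ?thesis
  proof cases
    case ca
    then have "inv y \<otimes> x = x \<otimes> inv y" using Kab sg by auto
    then show ?thesis using ca by simp
  next
    case cb
    have v: "inv y \<otimes> x \<notin> K"
    proof
      assume "inv y \<otimes> x \<in> K"
      then have "y \<otimes> (inv y \<otimes> x) \<in> K" using cb sg by auto
      then show False using cb x y by (simp add: m_assoc[symmetric])
    qed
    have vc: "inv y \<otimes> x \<in> carrier G" using x y by simp
    have "2 * \<beta> (inv y \<otimes> x) = 0" using skew_R2[OF b vc] F1 v vc by auto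
    then have n: "- \<beta> (inv y \<otimes> x) = \<beta> (inv y \<otimes> x)" by (rule neg2)
    have "x \<otimes> y = inv y \<otimes> x" using F2 x cb by auto
    then have "\<alpha> (inv y) * \<beta> (x \<otimes> inv (inv y)) = (- \<alpha> y) * \<beta> (inv y \<otimes> x)"
      using y skew_inv[OF a y] by simp
    also have "\<dots> = \<alpha> y * (- \<beta> (inv y \<otimes> x))" by simp
    also have "\<dots> = \<alpha> y * \<beta> (inv y \<otimes> x)" by (simp only: n)
    finally show ?thesis using cb by simp
  next
    case cc
    have ry: "2 * \<alpha> y = 0" using skew_R2[OF a y] F1 y cc by auto
    have v1: "inv y \<otimes> x \<notin> K"
    proof
      assume "inv y \<otimes> x \<in> K"
      then have "(inv y \<otimes> x) \<otimes> inv x \<in> K" using cc sg by auto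
      then have "inv y \<in> K" using x y by (simp add: m_assoc)
      then have "inv (inv y) \<in> K" using sg by blast
      then show False using cc y by simp
    qed
    have v2: "x \<otimes> inv y \<notin> K"
    proof
      assume "x \<otimes> inv y \<in> K"
      then have "inv x \<otimes> (x \<otimes> inv y) \<in> K" using cc sg by auto
      then have "inv y \<in> K" using x y by (simp add: m_assoc[symmetric])
      then have "inv (inv y) \<in> K" using sg by blast
      then show False using cc y by simp
    qed
    have "2 * \<beta> (inv y \<otimes> x) = 0" using skew_R2[OF b] F1 v1 x y by auto
    then have z1: "\<alpha> y * \<beta> (inv y \<otimes> x) = 0" using R22 ry by blast
    have "2 * \<beta> (x \<otimes> inv y) = 0" using skew_R2[OF b] F1 v2 x y by auto
    then have z2: "\<alpha> y * \<beta> (x \<otimes> inv y) = 0" using R22 ry by blast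
    show ?thesis using cc z1 z2 by simp
  next
    case cd
    have ry: "2 * \<alpha> y = 0" using skew_R2[OF a y] F1 y cd by auto
    have iy: "inv y = y" using F1 y cd by (simp add: inv_equality)
    have ix: "inv x = x" using F1 x cd by (simp add: inv_equality)
    have "x \<otimes> inv y = inv (inv y \<otimes> x)" using x y ix iy by (simp add: inv_mult_group)
    then have "\<beta> (x \<otimes> inv y) = - \<beta> (inv y \<otimes> x)" using skew_inv[OF b] x y by simp
    then have "\<alpha> y * \<beta> (x \<otimes> inv y) = (- \<alpha> y) * \<beta> (inv y \<otimes> x)" by simp
    then show ?thesis using cd neg2[OF ry] by simp
  qed
qed

lemma case1_back:
  assumes Ksg: "subgroup K G" and Kab: "\<forall>a\<in>K. \<forall>b\<in>K. a \<otimes> b = b \<otimes> a"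
    and F1: "\<forall>u\<in>carrier G. u \<notin> K \<longrightarrow> u \<otimes> u = \<one>"
    and F2: "\<forall>u\<in>carrier G. u \<notin> K \<longrightarrow> (\<forall>k\<in>K. u \<otimes> k = inv k \<otimes> u)"
    and R22: "\<forall>r1 r2 :: 'r::comm_ring_1. 2 * r1 = 0 \<and> 2 * r2 = 0 \<longrightarrow> r1 * r2 = 0"
  shows "skew_comm G (TYPE('r))"
proof (rule skew_comm_I)
  fix \<alpha> \<beta> :: "'a \<Rightarrow> 'r" and x
  assume a: "\<alpha> \<in> grp_ring_skew G" and b: "\<beta> \<in> grp_ring_skew G" and x: "x \<in> carrier G"
  let ?A = "{g. \<alpha> g \<noteq> 0}"
  let ?\<psi> = "\<lambda>y. if y \<in> K \<and> x \<notin> K then inv y else y"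
  note A = skew_fin[OF a]
  have Kinv: "inv y \<in> K \<longleftrightarrow> y \<in> K" if "y \<in> carrier G" for y
    using subgroup.m_inv_closed[OF Ksg] that by (metis inv_inv)
  have pp: "?\<psi> (?\<psi> y) = y" if "y \<in> ?A" for y
    using that A Kinv by auto
  have pA: "?\<psi> y \<in> ?A" if "y \<in> ?A" for y
  proof -
    have yc: "y \<in> carrier G" using that A by auto
    have "\<alpha> (inv y) \<noteq> 0" using skew_inv[OF a yc] that by simp
    then show ?thesis using that by auto
  qed
  show "(\<Sum>y\<in>?A. \<alpha> y * \<beta> (inv y \<otimes> x)) = (\<Sum>y\<in>?A. \<alpha> y * \<beta> (x \<otimes> inv y))"
  proof (rule sum.reindex_bij_witness[of _ ?\<psi> ?\<psi>])
    show "\<And>y. y \<in> ?A \<Longrightarrow> ?\<psi> (?\<psi> y) = y" by (rule pp)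
    show "\<And>y. y \<in> ?A \<Longrightarrow> ?\<psi> y \<in> ?A" by (rule pA)
    show "\<And>y. y \<in> ?A \<Longrightarrow> ?\<psi> (?\<psi> y) = y" by (rule pp)
    show "\<And>y. y \<in> ?A \<Longrightarrow> ?\<psi> y \<in> ?A" by (rule pA)
    fix y assume "y \<in> ?A"
    then have yc: "y \<in> carrier G" using A by auto
    show "\<alpha> (?\<psi> y) * \<beta> (x \<otimes> inv (?\<psi> y)) = \<alpha> y * \<beta> (inv y \<otimes> x)"
      using case1_point[OF Ksg Kab F1 F2 R22 a b x yc] by simp
  qed
qed

lemma hz1: "x \<in> carrier G \<Longrightarrow> y \<in> carrier G \<Longrightarrow> z \<in> carrier G \<Longrightarrow> z \<otimes> z = \<one> \<Longrightarrow> y \<otimes> z = z \<otimes> y \<Longrightarrow> x \<otimes> z = z \<otimes> x \<Longrightarrow> inv (y \<otimes> z) \<otimes> x = (inv y \<otimes> x) \<otimes> z"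
  by (simp add: inv_mult_group local.inv_equality m_assoc)
lemma hz2: "x \<in> carrier G \<Longrightarrow> y \<in> carrier G \<Longrightarrow> z \<in> carrier G \<Longrightarrow> z \<otimes> z = \<one> \<Longrightarrow> y \<otimes> z = z \<otimes> y \<Longrightarrow> x \<otimes> inv (y \<otimes> z) = (x \<otimes> inv y) \<otimes> z"
  by (simp add: inv_mult_group local.inv_equality m_assoc)
lemma hz3: "y \<in> carrier G \<Longrightarrow> z \<in> carrier G \<Longrightarrow> z \<otimes> z = \<one> \<Longrightarrow> y \<otimes> y = z \<Longrightarrow> y \<otimes> z = inv y"
  by (metis l_one local.inv_equality m_assoc r_inv_ex)
lemma hz4: "y \<in> carrier G \<Longrightarrow> z \<in> carrier G \<Longrightarrow> z \<otimes> z = \<one> \<Longrightarrow> y \<otimes> z = z \<otimes> y \<Longrightarrow> (y \<otimes> z) \<otimes> (y \<otimes> z) = y \<otimes> y"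
  by (metis group.inv_equality inv_solve_left is_group m_assoc m_closed)
lemma hz5: "x \<in> carrier G \<Longrightarrow> y \<in> carrier G \<Longrightarrow> y \<otimes> y = \<one> \<Longrightarrow> y \<otimes> (inv y \<otimes> x) = (inv y \<otimes> x) \<otimes> y \<Longrightarrow> inv y \<otimes> x = x \<otimes> inv y"
  by (simp add: inv_char m_assoc)

lemma skew_diff:
  fixes \<alpha> :: "'a \<Rightarrow> 'r::comm_ring_1"
  assumes a: "\<alpha> \<in> grp_ring_skew G" and y: "y \<in> carrier G" and z: "z \<in> carrier G" "z \<otimes> z = \<one>" "y \<otimes> z = z \<otimes> y"
    and sq: "y \<otimes> y = \<one> \<or> y \<otimes> y = z"
  shows "(y \<otimes> y = z \<and> \<alpha> y - \<alpha> (y \<otimes> z) = 2 * \<alpha> y) \<or> (y \<otimes> y = \<one> \<and> 2 * (\<alpha> y - \<alpha> (y \<otimes> z)) = 0)"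
proof (cases "y \<otimes> y = z")
  case True
  then have "\<alpha> (y \<otimes> z) = - \<alpha> y" using hz3[OF y z(1,2) True] skew_inv[OF a y] by simp
  then have "\<alpha> y - \<alpha> (y \<otimes> z) = 2 * \<alpha> y" by (metis diff_minus_eq_add mult_2)
  then show ?thesis using True by blast
next
  case False
  then have yy: "y \<otimes> y = \<one>" using sq by simp
  have yzc: "y \<otimes> z \<in> carrier G" using y z by simp
  have "(y \<otimes> z) \<otimes> (y \<otimes> z) = \<one>" using hz4[OF y z] yy by simp
  then have "2 * \<alpha> (y \<otimes> z) = 0" using skew_R2[OF a yzc] by simp
  moreover have "2 * \<alpha> y = 0" using skew_R2[OF a y yy] .
  ultimately show ?thesis using yy by (simp add: right_diff_distrib)
qed

lemma case2_point:
  fixes \<alpha> \<beta> :: "'a \<Rightarrow> 'r::comm_ring_1"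
  assumes z: "z \<in> carrier G" "z \<noteq> \<one>" "z \<otimes> z = \<one>" and zcent: "\<forall>u\<in>carrier G. u \<otimes> z = z \<otimes> u"
    and sq: "\<forall>u\<in>carrier G. u \<otimes> u = \<one> \<or> u \<otimes> u = z"
    and cm: "\<forall>a\<in>carrier G. \<forall>b\<in>carrier G. a \<otimes> b = b \<otimes> a \<or> a \<otimes> b = b \<otimes> a \<otimes> z"
    and four: "(4::'r) = 0"
    and R22: "(\<exists>r1 r2 :: 'r. 2 * r1 = 0 \<and> 2 * r2 = 0 \<and> r1 * r2 \<noteq> 0) \<longrightarrow>
         (\<forall>a\<in>carrier G. \<forall>b\<in>carrier G. a \<otimes> a = \<one> \<and> b \<otimes> b = \<one> \<and> a \<noteq> \<one> \<and> b \<noteq> \<one> \<longrightarrow> a \<otimes> b = b \<otimes> a)"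
    and a: "\<alpha> \<in> grp_ring_skew G" and b: "\<beta> \<in> grp_ring_skew G"
    and x: "x \<in> carrier G" and y: "y \<in> carrier G"
  shows "\<alpha> y * (\<beta> (inv y \<otimes> x) - \<beta> (x \<otimes> inv y)) +
         \<alpha> (y \<otimes> z) * (\<beta> (inv (y \<otimes> z) \<otimes> x) - \<beta> (x \<otimes> inv (y \<otimes> z))) = 0"
proof -
  define w where "w = inv y \<otimes> x"
  define w' where "w' = x \<otimes> inv y"
  have wc: "w \<in> carrier G" "w' \<in> carrier G" using x y by (simp_all add: w_def w'_def)
  have yz: "y \<otimes> z = z \<otimes> y" using zcent y by simp
  have e1: "inv (y \<otimes> z) \<otimes> x = w \<otimes> z" unfolding w_def by (rule hz1[OF x y z(1,3) yz]) (use zcent x in simp)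
  have e2: "x \<otimes> inv (y \<otimes> z) = w' \<otimes> z" unfolding w'_def by (rule hz2[OF x y z(1,3) yz])
  have "inv y \<otimes> x = x \<otimes> inv y \<or> inv y \<otimes> x = x \<otimes> inv y \<otimes> z" using cm x y by simp
  then consider (eq) "w = w'" | (ne) "w = w' \<otimes> z" unfolding w_def w'_def by blast
  then show ?thesis
  proof cases
    case eq
    then show ?thesis using e1 e2 w_def w'_def by simp
  next
    case ne
    have w'w: "w' = w \<otimes> z" using ne wc z by (simp add: m_assoc)
    have wne: "w \<noteq> w'"
    proof
      assume "w = w'"
      then have "w' \<otimes> z = w' \<otimes> \<one>" using ne wc by simp
      then show False using wc z l_cancel[of w' z "\<one>"] by simp
    qed
    have wz: "w' \<otimes> z = w" using w'w wc z by (simp add: m_assoc)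
    define dA where "dA = \<alpha> y - \<alpha> (y \<otimes> z)"
    define dB where "dB = \<beta> w - \<beta> (w \<otimes> z)"
    have "\<alpha> y * (\<beta> (inv y \<otimes> x) - \<beta> (x \<otimes> inv y)) +
         \<alpha> (y \<otimes> z) * (\<beta> (inv (y \<otimes> z) \<otimes> x) - \<beta> (x \<otimes> inv (y \<otimes> z))) = dA * dB"
      unfolding e1 e2 wz dA_def dB_def using w'w w_def w'_def by (simp add: algebra_simps)
    also have "dA * dB = 0"
    proof -
      have sA: "(y \<otimes> y = z \<and> dA = 2 * \<alpha> y) \<or> (y \<otimes> y = \<one> \<and> 2 * dA = 0)"
        unfolding dA_def by (rule skew_diff[OF a y z(1,3) yz]) (use sq y in simp)
      have sB: "(w \<otimes> w = z \<and> dB = 2 * \<beta> w) \<or> (w \<otimes> w = \<one> \<and> 2 * dB = 0)"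
        unfolding dB_def by (rule skew_diff[OF b wc(1) z(1,3)]) (use sq zcent wc in simp_all)
      have c1: "dA * dB = 0" if "dA = 2 * \<alpha> y" "dB = 2 * \<beta> w"
      proof -
        have "dA * dB = 4 * (\<alpha> y * \<beta> w)" using that by (simp add: algebra_simps)
        then show ?thesis using four by simp
      qed
      have c2: "dA * dB = 0" if "dA = 2 * \<alpha> y" "2 * dB = 0"
      proof -
        have "dA * dB = \<alpha> y * (2 * dB)" using that(1) by (metis mult.assoc mult.commute)
        then show ?thesis using that by simp
      qed
      have c3: "dA * dB = 0" if "2 * dA = 0" "dB = 2 * \<beta> w"
      proof -
        have "dA * dB = (2 * dA) * \<beta> w" using that(2) by (metis mult.assoc mult.commute)
        then show ?thesis using that by simp
      qed
      show ?thesis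
      proof (cases "2 * dA = 0 \<and> 2 * dB = 0")
        case False
        then show ?thesis using sA sB c1 c2 c3 by blast
      next
        case True
        show ?thesis
        proof (rule ccontr)
          assume nz: "dA * dB \<noteq> 0"
          then have "\<exists>r1 r2 :: 'r. 2 * r1 = 0 \<and> 2 * r2 = 0 \<and> r1 * r2 \<noteq> 0" using True by blast
          then have comm: "\<forall>a\<in>carrier G. \<forall>b\<in>carrier G. a \<otimes> a = \<one> \<and> b \<otimes> b = \<one> \<and> a \<noteq> \<one> \<and> b \<noteq> \<one> \<longrightarrow> a \<otimes> b = b \<otimes> a"
            using R22 by blast
          have yy: "y \<otimes> y = \<one>" using sA True nz c2 by blast
          have ww: "w \<otimes> w = \<one>" using sB True nz c3 by blast
          have y1: "y \<noteq> \<one>" using wne x unfolding w_def w'_def by auto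
          have w1: "w \<noteq> \<one>"
          proof
            assume "w = \<one>"
            then have "x = y" using x y unfolding w_def by (metis inv_solve_left r_one one_closed)
            then show False using wne y unfolding w_def w'_def by simp
          qed
          have "y \<otimes> w = w \<otimes> y" using comm y wc yy ww y1 w1 by blast
          then have "w = w'" using hz5[OF x y yy] unfolding w_def w'_def by simp
          then show False using wne by simp
        qed
      qed
    qed
    finally show ?thesis .
  qed
qed

lemma case2_back:
  assumes z: "z \<in> carrier G" "z \<noteq> \<one>" "z \<otimes> z = \<one>" and zcent: "\<forall>u\<in>carrier G. u \<otimes> z = z \<otimes> u"
    and sq: "\<forall>u\<in>carrier G. u \<otimes> u = \<one> \<or> u \<otimes> u = z"
    and cm: "\<forall>a\<in>carrier G. \<forall>b\<in>carrier G. a \<otimes> b = b \<otimes> a \<or> a \<otimes> b = b \<otimes> a \<otimes> z"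
    and four: "(4::'r::comm_ring_1) = 0"
    and R22: "(\<exists>r1 r2 :: 'r. 2 * r1 = 0 \<and> 2 * r2 = 0 \<and> r1 * r2 \<noteq> 0) \<longrightarrow>
         (\<forall>a\<in>carrier G. \<forall>b\<in>carrier G. a \<otimes> a = \<one> \<and> b \<otimes> b = \<one> \<and> a \<noteq> \<one> \<and> b \<noteq> \<one> \<longrightarrow> a \<otimes> b = b \<otimes> a)"
  shows "skew_comm G (TYPE('r))"
proof (rule skew_comm_I)
  fix \<alpha> \<beta> :: "'a \<Rightarrow> 'r" and x
  assume a: "\<alpha> \<in> grp_ring_skew G" and b: "\<beta> \<in> grp_ring_skew G" and x: "x \<in> carrier G"
  let ?A = "{g. \<alpha> g \<noteq> 0}"
  let ?F = "?A \<union> (\<lambda>y. y \<otimes> z) ` ?A"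
  let ?D = "\<lambda>y. \<alpha> y * (\<beta> (inv y \<otimes> x) - \<beta> (x \<otimes> inv y))"
  note A = skew_fin[OF a]
  have Fc: "?F \<subseteq> carrier G" using A z by auto
  have "(\<Sum>y\<in>?A. \<alpha> y * \<beta> (inv y \<otimes> x)) - (\<Sum>y\<in>?A. \<alpha> y * \<beta> (x \<otimes> inv y)) = (\<Sum>y\<in>?A. ?D y)"
    by (simp add: sum_subtractf right_diff_distrib)
  also have "\<dots> = (\<Sum>y\<in>?F. ?D y)"
    by (rule sum.mono_neutral_left) (use A in auto)
  also have "\<dots> = 0"
  proof (rule sum_pairing[where \<sigma> = "\<lambda>y. y \<otimes> z"])
    show "finite ?F" using A by simp
    show "\<forall>y\<in>?F. y \<otimes> z \<in> ?F \<and> y \<otimes> z \<otimes> z = y \<and> y \<otimes> z \<noteq> y"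
    proof
      fix y assume y: "y \<in> ?F"
      then have yc: "y \<in> carrier G" using Fc by auto
      have 1: "y \<otimes> z \<otimes> z = y" using yc z by (simp add: m_assoc)
      have 2: "y \<otimes> z \<noteq> y"
      proof
        assume "y \<otimes> z = y"
        then have "y \<otimes> z = y \<otimes> \<one>" using yc by simp
        then show False using yc z l_cancel[of y z "\<one>"] by simp
      qed
      have 3: "y \<otimes> z \<in> ?F"
      proof (cases "y \<in> ?A")
        case True then show ?thesis by blast
      next
        case False
        then obtain u where u: "u \<in> ?A" "y = u \<otimes> z" using y by blast
        have "u \<in> carrier G" using u A by auto
        then have "y \<otimes> z = u" using u z by (simp add: m_assoc)
        then show ?thesis using u by blast
      qed
      show "y \<otimes> z \<in> ?F \<and> y \<otimes> z \<otimes> z = y \<and> y \<otimes> z \<noteq> y" using 1 2 3 by blast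
    qed
    show "\<forall>y\<in>?F. ?D y + ?D (y \<otimes> z) = 0"
    proof
      fix y assume "y \<in> ?F"
      then have yc: "y \<in> carrier G" using Fc by auto
      show "?D y + ?D (y \<otimes> z) = 0" by (rule case2_point[OF z zcent sq cm four R22 a b x yc])
    qed
  qed
  finally show "(\<Sum>y\<in>?A. \<alpha> y * \<beta> (inv y \<otimes> x)) = (\<Sum>y\<in>?A. \<alpha> y * \<beta> (x \<otimes> inv y))"
    by simp
qed

end

context group begin

lemma hf1: "k0 \<in> carrier G \<Longrightarrow> k \<in> carrier G \<Longrightarrow> x0 \<in> carrier G \<Longrightarrow> x0 \<otimes> x0 = \<one> \<Longrightarrow> x0 \<otimes> k \<otimes> x0 = inv k \<Longrightarrow> k0 \<otimes> inv k = inv k \<otimes> k0 \<Longrightarrow> k0 \<otimes> x0 \<otimes> k = inv k \<otimes> (k0 \<otimes> x0)"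
  by (metis inv_char inv_solve_right m_assoc m_closed)
lemma hf2: "a \<in> carrier G \<Longrightarrow> b \<in> carrier G \<Longrightarrow> a \<otimes> b \<otimes> inv a \<otimes> inv b = \<one> \<Longrightarrow> a \<otimes> b = b \<otimes> a"
  by (metis inv_closed inv_inv inv_solve_right local.inv_equality m_closed)
lemma hf3: "a \<in> carrier G \<Longrightarrow> b \<in> carrier G \<Longrightarrow> z \<in> carrier G \<Longrightarrow> b \<otimes> a \<otimes> z = z \<otimes> (b \<otimes> a) \<Longrightarrow> a \<otimes> b \<otimes> inv a \<otimes> inv b = z \<Longrightarrow> a \<otimes> b = b \<otimes> a \<otimes> z"
  by (metis inv_closed inv_solve_right m_assoc m_closed)

lemma back1:
  fixes R :: "'r::comm_ring_1 itself"
  assumes h: "let K = generate G (NN G) in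
        (\<forall>a\<in>K. \<forall>b\<in>K. a \<otimes> b = b \<otimes> a) \<and>
        (\<exists>x\<in>carrier G. x \<otimes> x = \<one> \<and>
           K \<lhd> G \<and>
           K \<inter> generate G {x} = {\<one>} \<and>
           K <#> generate G {x} = carrier G \<and>
           (\<forall>k\<in>K. x \<otimes> k \<otimes> x = inv k)) \<and>
        (\<forall>r1 r2 :: 'r. 2 * r1 = 0 \<and> 2 * r2 = 0 \<longrightarrow> r1 * r2 = 0)"
  shows "skew_comm G R"
proof -
  let ?K = "generate G (NN G)"
  have Kab: "\<forall>a\<in>?K. \<forall>b\<in>?K. a \<otimes> b = b \<otimes> a" and R22: "\<forall>r1 r2 :: 'r. 2 * r1 = 0 \<and> 2 * r2 = 0 \<longrightarrow> r1 * r2 = 0"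
    using h by (simp_all add: Let_def)
  obtain x0 where x0: "x0 \<in> carrier G" "x0 \<otimes> x0 = \<one>" "?K <#> generate G {x0} = carrier G"
    "\<forall>k\<in>?K. x0 \<otimes> k \<otimes> x0 = inv k"
    using h by (auto simp: Let_def)
  have Ksg: "subgroup ?K G" by (rule generate_is_subgroup[OF NN_sub])
  have Ksub: "?K \<subseteq> carrier G" by (rule generate_incl[OF NN_sub])
  have F1: "\<forall>u\<in>carrier G. u \<notin> ?K \<longrightarrow> u \<otimes> u = \<one>"
    using generate.incl[of _ "NN G" G] by (auto simp: NN_iff)
  have F2: "\<forall>u\<in>carrier G. u \<notin> ?K \<longrightarrow> (\<forall>k\<in>?K. u \<otimes> k = inv k \<otimes> u)"
  proof (intro ballI impI)
    fix u k assume u: "u \<in> carrier G" "u \<notin> ?K" and k: "k \<in> ?K"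
    have "u \<in> ?K <#> {\<one>, x0}" using x0 u generate_two[OF x0(1,2)] by simp
    then obtain k0 c where kc: "k0 \<in> ?K" "c \<in> {\<one>, x0}" "u = k0 \<otimes> c" unfolding set_mult_def by blast
    have k0c: "k0 \<in> carrier G" using kc Ksub by auto
    have kcc: "k \<in> carrier G" using k Ksub by auto
    have c: "c = x0" using kc u k0c by auto
    have "k0 \<otimes> inv k = inv k \<otimes> k0" using Kab kc(1) k subgroup.m_inv_closed[OF Ksg] by auto
    then show "u \<otimes> k = inv k \<otimes> u" using hf1[OF k0c kcc x0(1,2)] x0(4) k kc c by simp
  qed
  have "skew_comm G (TYPE('r))" by (rule case1_back[OF Ksg Kab F1 F2 R22])
  then show ?thesis unfolding skew_comm_def .
qed

lemma hg1: "u \<in> carrier G \<Longrightarrow> c \<in> carrier G \<Longrightarrow> u \<otimes> c \<otimes> inv u = \<one> \<Longrightarrow> c = \<one>"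
  using local.inv_equality by fastforce
lemma hg2: "u \<in> carrier G \<Longrightarrow> c \<in> carrier G \<Longrightarrow> u \<otimes> c \<otimes> inv u = c \<Longrightarrow> u \<otimes> c = c \<otimes> u"
  by (metis inv_solve_right m_closed)
lemma hg3: "c \<in> carrier G \<Longrightarrow> c \<otimes> c = c \<Longrightarrow> c = \<one>"
  by simp

lemma back2:
  fixes R :: "'r::comm_ring_1 itself"
  assumes h: "CHAR('r) = 4 \<and> group_exponent G 4 \<and>
      (\<exists>c\<in>carrier G. derived G (carrier G) = generate G {c}) \<and>
      card (derived G (carrier G)) = 2 \<and>
      (\<forall>a\<in>carrier (G Mod derived G (carrier G)).
          a \<otimes>\<^bsub>G Mod derived G (carrier G)\<^esub> a = \<one>\<^bsub>G Mod derived G (carrier G)\<^esub>) \<and>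
      ((\<exists>r1 r2 :: 'r. 2 * r1 = 0 \<and> 2 * r2 = 0 \<and> r1 * r2 \<noteq> 0) \<longrightarrow>
         (\<forall>a\<in>carrier G. \<forall>b\<in>carrier G. ord a = 2 \<and> ord b = 2 \<longrightarrow> a \<otimes> b = b \<otimes> a))"
  shows "skew_comm G R"
proof -
  let ?D = "derived G (carrier G)"
  obtain c where c: "c \<in> carrier G" "?D = generate G {c}" using h by blast
  have card2: "card ?D = 2" using h by blast
  have quot: "\<forall>a\<in>carrier (G Mod ?D). a \<otimes>\<^bsub>G Mod ?D\<^esub> a = \<one>\<^bsub>G Mod ?D\<^esub>" using h by blast
  have invc: "(\<exists>r1 r2 :: 'r. 2 * r1 = 0 \<and> 2 * r2 = 0 \<and> r1 * r2 \<noteq> 0) \<longrightarrow>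
         (\<forall>a\<in>carrier G. \<forall>b\<in>carrier G. ord a = 2 \<and> ord b = 2 \<longrightarrow> a \<otimes> b = b \<otimes> a)" using h by blast
  have four: "(4::'r) = 0"
  proof -
    have "of_nat CHAR('r) = (0::'r)" by simp
    then show ?thesis using h by simp
  qed
  have nrm: "?D \<lhd> G" by (rule derived_self_is_normal)
  have Dsg: "subgroup ?D G" by (rule normal_imp_subgroup[OF nrm])
  have cD: "c \<in> ?D" using c by (auto intro: generate.incl)
  have c1: "c \<noteq> \<one>"
  proof
    assume "c = \<one>"
    then have "?D = {\<one>}" using c generate_one by simp
    then show False using card2 by simp
  qed
  have finD: "finite ?D" by (rule card_ge_0_finite) (simp add: card2)
  have oneD: "\<one> \<in> ?D" using subgroup.one_closed[OF Dsg] .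
  have D: "?D = {\<one>, c}"
  proof -
    have "{\<one>, c} \<subseteq> ?D" using cD oneD by auto
    moreover have "card {\<one>, c} = card ?D" using card2 c1 by simp
    ultimately show ?thesis using card_subset_eq[OF finD] by metis
  qed
  have cc: "c \<otimes> c = \<one>"
  proof -
    have "c \<otimes> c \<in> ?D" using subgroup.m_closed[OF Dsg cD cD] .
    moreover have "c \<otimes> c \<noteq> c" using hg3[OF c(1)] c1 by blast
    ultimately show ?thesis using D by auto
  qed
  have zcent: "\<forall>u\<in>carrier G. u \<otimes> c = c \<otimes> u"
  proof
    fix u assume u: "u \<in> carrier G"
    have "u \<otimes> c \<otimes> inv u \<in> ?D" using nrm u cD normal_inv_iff by blast
    moreover have "u \<otimes> c \<otimes> inv u \<noteq> \<one>" using hg1[OF u c(1)] c1 by blast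
    ultimately have "u \<otimes> c \<otimes> inv u = c" using D by auto
    then show "u \<otimes> c = c \<otimes> u" by (rule hg2[OF u c(1)])
  qed
  have sq: "\<forall>u\<in>carrier G. u \<otimes> u = \<one> \<or> u \<otimes> u = c"
  proof
    fix u assume u: "u \<in> carrier G"
    have "?D #> u \<in> carrier (G Mod ?D)" using u unfolding carrier_FactGroup by blast
    then have "(?D #> u) <#> (?D #> u) = ?D" using quot by simp
    then have "?D #> (u \<otimes> u) = ?D" using normal.rcos_sum[OF nrm u u] by simp
    moreover have "u \<otimes> u \<in> ?D #> (u \<otimes> u)" using rcos_self[OF _ Dsg] u by simp
    ultimately have "u \<otimes> u \<in> ?D" by simp
    then show "u \<otimes> u = \<one> \<or> u \<otimes> u = c" using D by auto
  qed
  have cm: "\<forall>a\<in>carrier G. \<forall>b\<in>carrier G. a \<otimes> b = b \<otimes> a \<or> a \<otimes> b = b \<otimes> a \<otimes> c"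
  proof (intro ballI)
    fix a b assume a: "a \<in> carrier G" and b: "b \<in> carrier G"
    have "a \<otimes> b \<otimes> inv a \<otimes> inv b \<in> derived_set G (carrier G)" using a b by blast
    then have "a \<otimes> b \<otimes> inv a \<otimes> inv b \<in> ?D" unfolding derived_def by (rule generate.incl)
    then consider "a \<otimes> b \<otimes> inv a \<otimes> inv b = \<one>" | "a \<otimes> b \<otimes> inv a \<otimes> inv b = c" using D by blast
    then show "a \<otimes> b = b \<otimes> a \<or> a \<otimes> b = b \<otimes> a \<otimes> c"
    proof cases
      case 1 then show ?thesis using hf2[OF a b] by simp
    next
      case 2
      have "b \<otimes> a \<otimes> c = c \<otimes> (b \<otimes> a)" using zcent a b by simp
      then show ?thesis using hf3[OF a b c(1)] 2 by simp
    qed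
  qed
  have R22: "(\<exists>r1 r2 :: 'r. 2 * r1 = 0 \<and> 2 * r2 = 0 \<and> r1 * r2 \<noteq> 0) \<longrightarrow>
         (\<forall>a\<in>carrier G. \<forall>b\<in>carrier G. a \<otimes> a = \<one> \<and> b \<otimes> b = \<one> \<and> a \<noteq> \<one> \<and> b \<noteq> \<one> \<longrightarrow> a \<otimes> b = b \<otimes> a)"
  proof (intro impI ballI)
    fix a b assume ex: "\<exists>r1 r2 :: 'r. 2 * r1 = 0 \<and> 2 * r2 = 0 \<and> r1 * r2 \<noteq> 0"
      and a: "a \<in> carrier G" and b: "b \<in> carrier G"
      and ab: "a \<otimes> a = \<one> \<and> b \<otimes> b = \<one> \<and> a \<noteq> \<one> \<and> b \<noteq> \<one>"
    have o2: "ord u = 2" if u: "u \<in> carrier G" "u \<otimes> u = \<one>" "u \<noteq> \<one>" for u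
    proof -
      have "u [^] (2::nat) = \<one>" using u by (simp add: pow2)
      then have "ord u dvd 2" using pow_eq_id[OF u(1)] by simp
      moreover have "ord u \<noteq> 1" using ord_eq_1[OF u(1)] u(3) by simp
      ultimately show ?thesis using dvd2_cases by blast
    qed
    show "a \<otimes> b = b \<otimes> a" using invc ex a b o2[OF a] o2[OF b] ab by blast
  qed
  have "skew_comm G (TYPE('r))" by (rule case2_back[OF c(1) c1 cc zcent sq cm four R22])
  then show ?thesis unfolding skew_comm_def .
qed

end

context group begin

lemma main_iff:
  fixes R :: "'r::comm_ring_1 itself"
  assumes char2: "CHAR('r) \<noteq> 2" and R2: "\<exists>r::'r. 2 * r = 0 \<and> r \<noteq> 0" and nonab: "\<not> comm_group G"
  shows "skew_comm G R \<longleftrightarrow> ((let K = generate G (NN G) in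
        (\<forall>a\<in>K. \<forall>b\<in>K. a \<otimes> b = b \<otimes> a) \<and>
        (\<exists>x\<in>carrier G. x \<otimes> x = \<one> \<and>
           K \<lhd> G \<and>
           K \<inter> generate G {x} = {\<one>} \<and>
           K <#> generate G {x} = carrier G \<and>
           (\<forall>k\<in>K. x \<otimes> k \<otimes> x = inv k)) \<and>
        (\<forall>r1 r2 :: 'r. 2 * r1 = 0 \<and> 2 * r2 = 0 \<longrightarrow> r1 * r2 = 0))
     \<or>
     (CHAR('r) = 4 \<and> group_exponent G 4 \<and>
      (\<exists>c\<in>carrier G. derived G (carrier G) = generate G {c}) \<and>
      card (derived G (carrier G)) = 2 \<and>
      (\<forall>a\<in>carrier (G Mod derived G (carrier G)).
          a \<otimes>\<^bsub>G Mod derived G (carrier G)\<^esub> a = \<one>\<^bsub>G Mod derived G (carrier G)\<^esub>) \<and>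
      ((\<exists>r1 r2 :: 'r. 2 * r1 = 0 \<and> 2 * r2 = 0 \<and> r1 * r2 \<noteq> 0) \<longrightarrow>
         (\<forall>a\<in>carrier G. \<forall>b\<in>carrier G. ord a = 2 \<and> ord b = 2 \<longrightarrow> a \<otimes> b = b \<otimes> a))))"
proof
  assume sc: "skew_comm G R"
  show "(let K = generate G (NN G) in
      (\<forall>a\<in>K. \<forall>b\<in>K. a \<otimes> b = b \<otimes> a) \<and>
      (\<exists>x\<in>carrier G. x \<otimes> x = \<one> \<and>
         K \<lhd> G \<and>
         K \<inter> generate G {x} = {\<one>} \<and>
         K <#> generate G {x} = carrier G \<and>
         (\<forall>k\<in>K. x \<otimes> k \<otimes> x = inv k)) \<and>
      (\<forall>r1 r2 :: 'r. 2 * r1 = 0 \<and> 2 * r2 = 0 \<longrightarrow> r1 * r2 = 0))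
   \<or>
   (CHAR('r) = 4 \<and> group_exponent G 4 \<and>
    (\<exists>c\<in>carrier G. derived G (carrier G) = generate G {c}) \<and>
    card (derived G (carrier G)) = 2 \<and>
    (\<forall>a\<in>carrier (G Mod derived G (carrier G)).
        a \<otimes>\<^bsub>G Mod derived G (carrier G)\<^esub> a = \<one>\<^bsub>G Mod derived G (carrier G)\<^esub>) \<and>
    ((\<exists>r1 r2 :: 'r. 2 * r1 = 0 \<and> 2 * r2 = 0 \<and> r1 * r2 \<noteq> 0) \<longrightarrow>
       (\<forall>a\<in>carrier G. \<forall>b\<in>carrier G. ord a = 2 \<and> ord b = 2 \<longrightarrow> a \<otimes> b = b \<otimes> a)))"
  proof (cases "\<forall>a\<in>NN G. \<forall>b\<in>NN G. a \<otimes> b = b \<otimes> a")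
    case True
    then show ?thesis using case1_forward[OF sc R2 nonab True] by blast
  next
    case False
    then obtain g0 h0 where gh: "g0 \<in> NN G" "h0 \<in> NN G" "g0 \<otimes> h0 \<noteq> h0 \<otimes> g0" by blast
    have g0: "g0 \<in> carrier G" "g0 \<otimes> g0 \<noteq> \<one>" and h0: "h0 \<in> carrier G" "h0 \<otimes> h0 \<noteq> \<one>"
      using gh by (auto simp: NN_iff)
    show ?thesis using case2_forward[OF sc char2 R2 g0 h0 gh(3)] by blast
  qed
next
  assume "(let K = generate G (NN G) in
      (\<forall>a\<in>K. \<forall>b\<in>K. a \<otimes> b = b \<otimes> a) \<and>
      (\<exists>x\<in>carrier G. x \<otimes> x = \<one> \<and>
         K \<lhd> G \<and>
         K \<inter> generate G {x} = {\<one>} \<and>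
         K <#> generate G {x} = carrier G \<and>
         (\<forall>k\<in>K. x \<otimes> k \<otimes> x = inv k)) \<and>
      (\<forall>r1 r2 :: 'r. 2 * r1 = 0 \<and> 2 * r2 = 0 \<longrightarrow> r1 * r2 = 0))
   \<or>
   (CHAR('r) = 4 \<and> group_exponent G 4 \<and>
    (\<exists>c\<in>carrier G. derived G (carrier G) = generate G {c}) \<and>
    card (derived G (carrier G)) = 2 \<and>
    (\<forall>a\<in>carrier (G Mod derived G (carrier G)).
        a \<otimes>\<^bsub>G Mod derived G (carrier G)\<^esub> a = \<one>\<^bsub>G Mod derived G (carrier G)\<^esub>) \<and>
    ((\<exists>r1 r2 :: 'r. 2 * r1 = 0 \<and> 2 * r2 = 0 \<and> r1 * r2 \<noteq> 0) \<longrightarrow>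
       (\<forall>a\<in>carrier G. \<forall>b\<in>carrier G. ord a = 2 \<and> ord b = 2 \<longrightarrow> a \<otimes> b = b \<otimes> a)))"
  then show "skew_comm G R"
  proof
    assume h: "let K = generate G (NN G) in
      (\<forall>a\<in>K. \<forall>b\<in>K. a \<otimes> b = b \<otimes> a) \<and>
      (\<exists>x\<in>carrier G. x \<otimes> x = \<one> \<and>
         K \<lhd> G \<and>
         K \<inter> generate G {x} = {\<one>} \<and>
         K <#> generate G {x} = carrier G \<and>
         (\<forall>k\<in>K. x \<otimes> k \<otimes> x = inv k)) \<and>
      (\<forall>r1 r2 :: 'r. 2 * r1 = 0 \<and> 2 * r2 = 0 \<longrightarrow> r1 * r2 = 0)"
    show "skew_comm G R" by (rule back1[OF h])
  next
    assume h: "CHAR('r) = 4 \<and> group_exponent G 4 \<and>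
    (\<exists>c\<in>carrier G. derived G (carrier G) = generate G {c}) \<and>
    card (derived G (carrier G)) = 2 \<and>
    (\<forall>a\<in>carrier (G Mod derived G (carrier G)).
        a \<otimes>\<^bsub>G Mod derived G (carrier G)\<^esub> a = \<one>\<^bsub>G Mod derived G (carrier G)\<^esub>) \<and>
    ((\<exists>r1 r2 :: 'r. 2 * r1 = 0 \<and> 2 * r2 = 0 \<and> r1 * r2 \<noteq> 0) \<longrightarrow>
       (\<forall>a\<in>carrier G. \<forall>b\<in>carrier G. ord a = 2 \<and> ord b = 2 \<longrightarrow> a \<otimes> b = b \<otimes> a))"
    show "skew_comm G R" by (rule back2[OF h])
  qed
qed

end

theorem corollary2p6:
  fixes G :: "('g, 'm) monoid_scheme"
    and R :: "'r::comm_ring_1 itself"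
  assumes grp: "group G"
    and char2: "CHAR('r) \<noteq> 2"
    and R2: "\<exists>r::'r. 2 * r = 0 \<and> r \<noteq> 0"
    and nonab: "\<not> comm_group G"
  shows "(\<forall>\<alpha> \<beta> :: 'g \<Rightarrow> 'r. \<alpha> \<in> grp_ring_skew G \<and> \<beta> \<in> grp_ring_skew G \<longrightarrow>
            grp_ring_mult G \<alpha> \<beta> = grp_ring_mult G \<beta> \<alpha>)
    \<longleftrightarrow>
    ((let K = generate G {g \<in> carrier G. g [^]\<^bsub>G\<^esub> (2::nat) \<noteq> \<one>\<^bsub>G\<^esub>} in
        (\<forall>a\<in>K. \<forall>b\<in>K. a \<otimes>\<^bsub>G\<^esub> b = b \<otimes>\<^bsub>G\<^esub> a) \<and>
        (\<exists>x\<in>carrier G. x \<otimes>\<^bsub>G\<^esub> x = \<one>\<^bsub>G\<^esub> \<and>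
           K \<lhd> G \<and>
           K \<inter> generate G {x} = {\<one>\<^bsub>G\<^esub>} \<and>
           K <#>\<^bsub>G\<^esub> generate G {x} = carrier G \<and>
           (\<forall>k\<in>K. x \<otimes>\<^bsub>G\<^esub> k \<otimes>\<^bsub>G\<^esub> x = inv\<^bsub>G\<^esub> k)) \<and>
        (\<forall>r1 r2 :: 'r. 2 * r1 = 0 \<and> 2 * r2 = 0 \<longrightarrow> r1 * r2 = 0))
     \<or>
     (CHAR('r) = 4 \<and> group_exponent G 4 \<and>
      (\<exists>c\<in>carrier G. derived G (carrier G) = generate G {c}) \<and>
      card (derived G (carrier G)) = 2 \<and>
      (\<forall>a\<in>carrier (G Mod derived G (carrier G)).
          a \<otimes>\<^bsub>G Mod derived G (carrier G)\<^esub> a = \<one>\<^bsub>G Mod derived G (carrier G)\<^esub>) \<and>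
      ((\<exists>r1 r2 :: 'r. 2 * r1 = 0 \<and> 2 * r2 = 0 \<and> r1 * r2 \<noteq> 0) \<longrightarrow>
         (\<forall>a\<in>carrier G. \<forall>b\<in>carrier G. group.ord G a = 2 \<and> group.ord G b = 2 \<longrightarrow>
            a \<otimes>\<^bsub>G\<^esub> b = b \<otimes>\<^bsub>G\<^esub> a))))"
proof -
  note group.main_iff[OF grp char2 R2 nonab, of R]
  then show ?thesis unfolding skew_comm_def NN_def .
qed

end
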